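(* Fix $c>0$ and an integer $K\ge1$, and let $p_n=c/n$. For the Tetris exploration algorithm on $n$ vertices (described in the context), let $A_k(t)=|\mathcal{A}_k(t)|$ and $\alpha^n_k(t)=A_k(\lfloor nt\rfloor)/n$ for $t\in[0,1]$, $1\le k\le K$, and $\boldsymbol\alpha^n(t)=(\alpha_1^n(t),\dots,\alpha^n_K(t))$. For $\boldsymbol\alpha=(\alpha_1,\dots,\alpha_K)$ define $$\delta_1(\boldsymbol\alpha)=e^{-c(\alpha_1+\dots+\alpha_K)},\qquad \delta_k(\boldsymbol\alpha)=\big(1-e^{-c\alpha_{k-1}}\big)e^{-c(\alpha_k+\dots+\alpha_K)}\ \ (2\le k\le K).$$ Then the integral equations $\alpha_k(t)=\int_0^t\delta_k(\boldsymbol\alpha(s))\,ds$, $1\le k\le K$, $t\in[0,1]$, have a unique solution $\boldsymbol\alpha(t)$, and the process $\{\boldsymbol\alpha^n(t)\}_{0\le t\le1}$ converges in distribution (uniformly on $[0,1]$) to the deterministic process $\{\boldsymbol\alpha(t)\}_{0\le t\le1}$. Consequently, if $N_k(n)$ denotes the number of vertices at height $k$ in the final state of the Tetris model on $G(n,c/n)$, then for all $1\le k\le K$, $N_k(n)/n\to\alpha_k(1)$ in distribution as $n\to\infty$.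
   Context: $G(n,p_n)$ is the Erdős–Rényi random graph on $[n]$ with independent edge probability $p_n$. Tetris model: given $G(n,p_n)$, set $h_v(0)=0$ for all $v$. At step $t+1$ a vertex $u$ is chosen uniformly at random among vertices not selected before; with $m$ the maximum of $h_w(t)$ over neighbours $w$ of $u$ ($m=0$ if none), set $h_u(t+1)=m+1$ if $m<K$ and $h_u(t+1)=0$ otherwise. After $n$ steps, $N_k(n)=|\{v:h_v(n)=k\}|$. Tetris exploration algorithm: maintain $\mathcal{A}_k(t)$, $0\le k\le K$ (explored vertices at height $k$; height $0$ = frozen) and unexplored set $\mathcal{U}(t)$, initially empty and $[n]$ respectively. At step $t+1$, select $v\in\mathcal{U}(t)$ uniformly, remove it from $\mathcal{U}$, join it to each explored vertex independently with probability $p_n$; if $j$ is the maximal height among explored vertices joined to $v$ ($j=0$ if none) and $j\le K-1$, then $v$ joins $\mathcal{A}_{j+1}$, otherwise $v$ joins $\mathcal{A}_0$. Convergence in distribution of processes is understood as uniform convergence over compact sets. *)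

theory Defs
  imports "HOL-Probability.Probability" "HOL-Combinatorics.Multiset_Permutations"
begin

text \<open>A state records, for every vertex v < n, either None (v is unexplored, i.e. in U(t))
  or Some k (v is explored and lies in A_k(t); k = 0 means frozen).\<close>

type_synonym expl_state = "nat \<Rightarrow> nat option"

definition expl_init :: expl_state where
  "expl_init = (\<lambda>_. None)"

definition unexplored :: "nat \<Rightarrow> expl_state \<Rightarrow> nat set" where
  "unexplored n h = {v. v < n \<and> h v = None}"

definition explored :: "nat \<Rightarrow> expl_state \<Rightarrow> nat set" where
  "explored n h = {v. v < n \<and> h v \<noteq> None}"

definition expl_step :: "nat \<Rightarrow> real \<Rightarrow> nat \<Rightarrow> expl_state \<Rightarrow> expl_state pmf" where
  "expl_step n p K h =
     (if unexplored n h = {} then return_pmf h else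
      do { v \<leftarrow> pmf_of_set (unexplored n h);
           J \<leftarrow> Pi_pmf (explored n h) False (\<lambda>_. bernoulli_pmf p);
           let j = Max (insert 0 {k. \<exists>w\<in>explored n h. J w \<and> h w = Some k});
           return_pmf (h(v := Some (if j \<le> K - 1 then j + 1 else 0))) })"

fun expl_traj :: "nat \<Rightarrow> real \<Rightarrow> nat \<Rightarrow> nat \<Rightarrow> expl_state list pmf" where
  "expl_traj n p K 0 = return_pmf [expl_init]"
| "expl_traj n p K (Suc t) =
     do { xs \<leftarrow> expl_traj n p K t; h \<leftarrow> expl_step n p K (last xs); return_pmf (xs @ [h]) }"

definition A_count :: "nat \<Rightarrow> expl_state \<Rightarrow> nat \<Rightarrow> nat" where
  "A_count n h k = card {v. v < n \<and> h v = Some k}"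

definition alpha_n :: "nat \<Rightarrow> expl_state list \<Rightarrow> real \<Rightarrow> nat \<Rightarrow> real" where
  "alpha_n n xs t k = real (A_count n (xs ! nat \<lfloor>real n * t\<rfloor>) k) / real n"

definition delta :: "real \<Rightarrow> nat \<Rightarrow> (nat \<Rightarrow> real) \<Rightarrow> nat \<Rightarrow> real" where
  "delta c K a k =
     (if k = 1 then exp (- c * (\<Sum>i=1..K. a i))
      else (1 - exp (- c * a (k - 1))) * exp (- c * (\<Sum>i=k..K. a i)))"

definition solves_tetris_ode :: "real \<Rightarrow> nat \<Rightarrow> (real \<Rightarrow> nat \<Rightarrow> real) \<Rightarrow> bool" where
  "solves_tetris_ode c K \<alpha> \<longleftrightarrow>
     (\<forall>t\<in>{0..1}. \<forall>k\<in>{1..K}. ((\<lambda>s. delta c K (\<alpha> s) k) has_integral \<alpha> t k) {0..t})"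

definition gnp :: "nat \<Rightarrow> real \<Rightarrow> (nat \<times> nat \<Rightarrow> bool) pmf" where
  "gnp n p = Pi_pmf {(i, j). i < j \<and> j < n} False (\<lambda>_. bernoulli_pmf p)"

definition adj :: "(nat \<times> nat \<Rightarrow> bool) \<Rightarrow> nat \<Rightarrow> nat \<Rightarrow> bool" where
  "adj E u w \<longleftrightarrow> u \<noteq> w \<and> E (min u w, max u w)"

definition tetris_update :: "nat \<Rightarrow> nat \<Rightarrow> (nat \<times> nat \<Rightarrow> bool) \<Rightarrow> (nat \<Rightarrow> nat) \<Rightarrow> nat \<Rightarrow> (nat \<Rightarrow> nat)" where
  "tetris_update n K E h u =
     (let m = Max (insert 0 {h w | w. w < n \<and> adj E u w})
      in h(u := (if m < K then m + 1 else 0)))"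

definition tetris_final :: "nat \<Rightarrow> nat \<Rightarrow> (nat \<times> nat \<Rightarrow> bool) \<Rightarrow> nat list \<Rightarrow> (nat \<Rightarrow> nat)" where
  "tetris_final n K E vs = foldl (tetris_update n K E) (\<lambda>_. 0) vs"

definition tetris_pmf :: "nat \<Rightarrow> real \<Rightarrow> nat \<Rightarrow> (nat \<Rightarrow> nat) pmf" where
  "tetris_pmf n p K =
     do { E \<leftarrow> gnp n p; ord \<leftarrow> pmf_of_set (permutations_of_set {0..<n});
          return_pmf (tetris_final n K E ord) }"

definition N_count :: "nat \<Rightarrow> (nat \<Rightarrow> nat) \<Rightarrow> nat \<Rightarrow> nat" where
  "N_count n h k = card {v. v < n \<and> h v = k}"

end

theory Submission
  imports Defs
begin

definition dsum :: "nat \<Rightarrow> (nat \<Rightarrow> real) \<Rightarrow> (nat \<Rightarrow> real) \<Rightarrow> real" where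
  "dsum K a b = (\<Sum>i=1..K. \<bar>a i - b i\<bar>)"

lemma exp_lip:
  fixes c x y :: real
  assumes "c \<ge> 0" "x \<ge> 0" "y \<ge> 0"
  shows "\<bar>exp (- c * x) - exp (- c * y)\<bar> \<le> c * \<bar>x - y\<bar>"
proof -
  have *: "exp (- c * x) - exp (- c * y) \<le> c * (y - x)" if "x \<le> y" "x \<ge> 0" for x y :: real
  proof -
    have "exp (- c * x) - exp (- c * y) = exp (- c * x) * (1 - exp (- (c * (y - x))))"
      by (simp add: algebra_simps flip: exp_add)
    also have "\<dots> \<le> 1 * (c * (y - x))"
    proof (rule mult_mono)
      show "exp (- c * x) \<le> 1" using that assms by simp
      show "1 - exp (- (c * (y - x))) \<le> c * (y - x)"
        using exp_ge_add_one_self[of "- (c * (y - x))"] by linarith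
    qed (use that assms in auto)
    finally show ?thesis by simp
  qed
  have m1: "exp (- c * y) \<le> exp (- c * x)" if "x \<le> y" for x y :: real
    using that assms by (simp add: mult_left_mono)
  show ?thesis
  proof (cases "x \<le> y")
    case True
    with *[of x y] m1[of x y] assms show ?thesis by (simp add: abs_if)
  next
    case False
    with *[of y x] m1[of y x] assms show ?thesis by (simp add: abs_if)
  qed
qed

lemma delta_alt:
  assumes "k \<noteq> 1"
  shows "delta c K a k = exp (- c * (\<Sum>i=k..K. a i)) - exp (- c * (a (k - 1) + (\<Sum>i=k..K. a i)))"
  using assms by (simp add: delta_def algebra_simps exp_add[symmetric])

lemma delta_bounds:
  assumes c: "c > 0" and a: "\<And>i. i \<in> {1..K} \<Longrightarrow> a i \<ge> 0" and k: "k \<in> {1..K}"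
  shows "0 \<le> delta c K a k" "delta c K a k \<le> 1"
proof -
  have S: "(\<Sum>i=j..K. a i) \<ge> 0" if "j \<ge> 1" for j using a that by (intro sum_nonneg) auto
  show "0 \<le> delta c K a k"
  proof (cases "k = 1")
    case False
    then have "k - 1 \<in> {1..K}" using k by auto
    then have "a (k - 1) \<ge> 0" using a by blast
    then have "exp (- c * a (k - 1)) \<le> 1" using c by simp
    then show ?thesis using False by (simp add: delta_def)
  qed (simp add: delta_def)
  show "delta c K a k \<le> 1"
  proof (cases "k = 1")
    case True
    then show ?thesis using S[of 1] c by (simp add: delta_def)
  next
    case False
    then have "k - 1 \<in> {1..K}" using k by auto
    then have "a (k - 1) \<ge> 0" using a by blast
    then have "exp (- c * a (k - 1)) \<le> 1" "exp (- c * (\<Sum>i=k..K. a i)) \<le> 1"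
      using c S[of k] k by auto
    moreover have "0 \<le> 1 - exp (- c * a (k - 1))" using \<open>exp (- c * a (k - 1)) \<le> 1\<close> by simp
    ultimately have "(1 - exp (- c * a (k - 1))) * exp (- c * (\<Sum>i=k..K. a i)) \<le> 1"
      by (intro mult_le_one) auto
    then show ?thesis using False by (simp add: delta_def)
  qed
qed

lemma sum_abs_diff_le_dsum:
  assumes "j \<ge> 1"
  shows "\<bar>(\<Sum>i=j..K. a i) - (\<Sum>i=j..K. b i)\<bar> \<le> dsum K a b"
proof -
  have "\<bar>(\<Sum>i=j..K. a i) - (\<Sum>i=j..K. b i)\<bar> = \<bar>\<Sum>i=j..K. a i - b i\<bar>"
    by (simp add: sum_subtractf)
  also have "\<dots> \<le> (\<Sum>i=j..K. \<bar>a i - b i\<bar>)" by (rule sum_abs)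
  also have "\<dots> \<le> dsum K a b" unfolding dsum_def
    using assms by (intro sum_mono2) auto
  finally show ?thesis .
qed

lemma delta_lip:
  assumes c: "c > 0" and a: "\<And>i. i \<in> {1..K} \<Longrightarrow> a i \<ge> 0"
    and b: "\<And>i. i \<in> {1..K} \<Longrightarrow> b i \<ge> 0" and k: "k \<in> {1..K}"
  shows "\<bar>delta c K a k - delta c K b k\<bar> \<le> 2 * c * dsum K a b"
proof -
  have Sa: "(\<Sum>i=j..K. a i) \<ge> 0" if "j \<ge> 1" for j using a that by (intro sum_nonneg) auto
  have Sb: "(\<Sum>i=j..K. b i) \<ge> 0" if "j \<ge> 1" for j using b that by (intro sum_nonneg) auto
  have d0: "dsum K a b \<ge> 0" unfolding dsum_def by (intro sum_nonneg) auto
  show ?thesis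
  proof (cases "k = 1")
    case True
    have "\<bar>delta c K a k - delta c K b k\<bar> \<le> c * \<bar>(\<Sum>i=1..K. a i) - (\<Sum>i=1..K. b i)\<bar>"
      using True exp_lip[OF less_imp_le[OF c] Sa[of 1] Sb[of 1]] by (simp add: delta_def)
    also have "\<dots> \<le> c * dsum K a b"
      using sum_abs_diff_le_dsum[where j=1 and K=K and a=a and b=b] c by (intro mult_left_mono) auto
    finally show ?thesis using c d0 by linarith
  next
    case False
    then have k2: "k \<ge> 2" "k - 1 \<ge> 1" using k by auto
    have eq: "(\<Sum>i=k-1..K. f i) = f (k - 1) + (\<Sum>i=k..K. f i)" for f :: "nat \<Rightarrow> real"
    proof -
      have "{k-1..K} = insert (k - 1) {k..K}" using k2 k by auto
      then show ?thesis using k2 by simp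
    qed
    have aa: "a (k - 1) + (\<Sum>i=k..K. a i) \<ge> 0" using Sa[of "k-1"] eq[of a] k2 by simp
    have bb: "b (k - 1) + (\<Sum>i=k..K. b i) \<ge> 0" using Sb[of "k-1"] eq[of b] k2 by simp
    have e1: "\<bar>exp (- c * (\<Sum>i=k..K. a i)) - exp (- c * (\<Sum>i=k..K. b i))\<bar> \<le> c * dsum K a b"
      using exp_lip[OF less_imp_le[OF c] Sa[of k] Sb[of k]] k
        mult_left_mono[OF sum_abs_diff_le_dsum[where j=k and K=K and a=a and b=b], of c] k2 c
      by linarith
    have e2: "\<bar>exp (- c * (a (k - 1) + (\<Sum>i=k..K. a i))) - exp (- c * (b (k - 1) + (\<Sum>i=k..K. b i)))\<bar> \<le> c * dsum K a b"
      using exp_lip[OF less_imp_le[OF c] aa bb] 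
         mult_left_mono[OF sum_abs_diff_le_dsum[where j="k-1" and K=K and a=a and b=b], of c] k2 c eq[of a] eq[of b]
      by (simp del: mult_minus_left) (meson order_trans mult_left_mono less_imp_le)
    show ?thesis using e1 e2 by (simp add: delta_alt[OF False])
  qed
qed

lemma delta_continuous:
  assumes "\<And>i. i \<in> {1..K} \<Longrightarrow> continuous_on S (\<lambda>s. f s i)" and kk: "k \<in> {1..K}"
  shows "continuous_on S (\<lambda>s. delta c K (f s) k)"
proof (cases "k = 1")
  case True
  then show ?thesis unfolding delta_def using assms
    by (auto intro!: continuous_intros)
next
  case False
  have k: "k - 1 \<in> {1..K}" if "K \<ge> k" using False that kk by auto
  show ?thesis unfolding delta_def using assms False k kk
    by (auto intro!: continuous_intros)
qed

lemma int_lip: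
  fixes g F :: "real \<Rightarrow> real"
  assumes g01: "\<And>s. s \<in> {0..1} \<Longrightarrow> 0 \<le> g s \<and> g s \<le> 1"
    and hi: "\<And>t. t \<in> {0..1} \<Longrightarrow> (g has_integral F t) {0..t}"
  shows "\<And>t. t \<in> {0..1} \<Longrightarrow> 0 \<le> F t \<and> F t \<le> t"
    and "\<And>s t. s \<in> {0..1} \<Longrightarrow> t \<in> {0..1} \<Longrightarrow> s \<le> t \<Longrightarrow> 0 \<le> F t - F s \<and> F t - F s \<le> t - s"
    and "1-lipschitz_on {0..1} F"
proof -
  have main: "0 \<le> F t - F s \<and> F t - F s \<le> t - s" if st: "s \<in> {0..1}" "t \<in> {0..1}" "s \<le> t" for s t
  proof -
    have it: "g integrable_on {0..t}" using hi[OF st(2)] by blast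
    have "integral {0..s} g + integral {s..t} g = integral {0..t} g"
      using st it by (intro Henstock_Kurzweil_Integration.integral_combine) auto
    moreover have "integral {0..t} g = F t" using hi[OF st(2)] by (rule integral_unique)
    moreover have "integral {0..s} g = F s" using hi[OF st(1)] by (rule integral_unique)
    moreover have ist: "g integrable_on {s..t}"
      using st by (intro integrable_subinterval_real[OF it]) auto
    have "integral {s..t} g \<le> integral {s..t} (\<lambda>_. 1::real)"
      using st g01 by (intro integral_le ist) auto
    moreover have "0 \<le> integral {s..t} g"
      using st g01 by (intro integral_nonneg ist) auto
    ultimately show ?thesis using st by simp
  qed
  show "0 \<le> F t \<and> F t \<le> t" if "t \<in> {0..1}" for t
  proof -
    have "(g has_integral F 0) {0}" using hi[of 0] by simp
    then have "F 0 = 0" using has_integral_unique has_integral_refl(2) by (metis box_real(2))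
    then show ?thesis using main[of 0 t] that by auto
  qed
  show "0 \<le> F t - F s \<and> F t - F s \<le> t - s" if "s \<in> {0..1}" "t \<in> {0..1}" "s \<le> t" for s t
    using main that by blast
  show "1-lipschitz_on {0..1} F"
  proof (rule lipschitz_onI)
    fix x y :: real assume xy: "x \<in> {0..1}" "y \<in> {0..1}"
    show "dist (F x) (F y) \<le> 1 * dist x y"
    proof (cases "x \<le> y")
      case True then show ?thesis using main[OF xy True] by (simp add: dist_real_def)
    next
      case False then show ?thesis using main[OF xy(2,1)] by (simp add: dist_real_def)
    qed
  qed simp
qed

lemma pow_has_integral:
  assumes "(t::real) \<ge> 0"
  shows "((\<lambda>s. s ^ m) has_integral t ^ Suc m / Suc m) {0..t}"
proof -
  have "((\<lambda>s. s ^ m) has_integral (t ^ Suc m / Suc m - 0 ^ Suc m / Suc m)) {0..t}"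
  proof (intro fundamental_theorem_of_calculus)
    fix x :: real
    have "((\<lambda>x. x ^ Suc m) has_real_derivative real (Suc m) * x ^ (Suc m - Suc 0)) (at x)"
      by (rule DERIV_pow)
    then have "((\<lambda>x. x ^ Suc m / real (Suc m)) has_real_derivative real (Suc m) * x ^ (Suc m - Suc 0) / real (Suc m)) (at x)"
      by (rule DERIV_cdivide)
    then have "((\<lambda>x. x ^ Suc m / real (Suc m)) has_real_derivative x ^ m) (at x)"
      by (simp del: of_nat_Suc)
    then show "((\<lambda>x. x ^ Suc m / real (Suc m)) has_vector_derivative x ^ m) (at x within {0..t})"
      by (simp add: has_real_derivative_iff_has_vector_derivative[symmetric] has_field_derivative_at_within del: of_nat_Suc)
  qed (use assms in auto)
  then show ?thesis by simp
qed

lemma STEP: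
  fixes f g F G :: "real \<Rightarrow> nat \<Rightarrow> real"
  assumes c: "c > 0" and B: "B \<ge> 0"
    and fnn: "\<And>s i. s \<in> {0..1} \<Longrightarrow> i \<in> {1..K} \<Longrightarrow> f s i \<ge> 0"
    and gnn: "\<And>s i. s \<in> {0..1} \<Longrightarrow> i \<in> {1..K} \<Longrightarrow> g s i \<ge> 0"
    and fc: "\<And>i. i \<in> {1..K} \<Longrightarrow> continuous_on {0..1} (\<lambda>s. f s i)"
    and gc: "\<And>i. i \<in> {1..K} \<Longrightarrow> continuous_on {0..1} (\<lambda>s. g s i)"
    and F: "\<And>t k. t \<in> {0..1} \<Longrightarrow> k \<in> {1..K} \<Longrightarrow> F t k = integral {0..t} (\<lambda>s. delta c K (f s) k)"
    and G: "\<And>t k. t \<in> {0..1} \<Longrightarrow> k \<in> {1..K} \<Longrightarrow> G t k = integral {0..t} (\<lambda>s. delta c K (g s) k)"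
    and bd: "\<And>s. s \<in> {0..1} \<Longrightarrow> dsum K (f s) (g s) \<le> B * (2 * c * K * s) ^ m / fact m"
    and t: "t \<in> {0..1}"
  shows "dsum K (F t) (G t) \<le> B * (2 * c * K * t) ^ Suc m / fact (Suc m)"
proof -
  define L where "L = 2 * c * K"
  have L0: "L \<ge> 0" using c by (simp add: L_def)
  have one: "\<bar>F t k - G t k\<bar> \<le> 2 * c * B * L ^ m / fact m * (t ^ Suc m / Suc m)" if k: "k \<in> {1..K}" for k
  proof -
    have intf: "(\<lambda>s. delta c K (f s) k) integrable_on {0..t}"
      using t k by (intro integrable_continuous_interval continuous_on_subset[OF delta_continuous[OF fc]]) auto
    have intg: "(\<lambda>s. delta c K (g s) k) integrable_on {0..t}"
      using t k by (intro integrable_continuous_interval continuous_on_subset[OF delta_continuous[OF gc]]) auto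
    have hp: "((\<lambda>s. 2 * c * B * L ^ m / fact m * s ^ m) has_integral 
               2 * c * B * L ^ m / fact m * (t ^ Suc m / Suc m)) {0..t}"
      using t by (intro has_integral_mult_right pow_has_integral) auto
    have "F t k - G t k = integral {0..t} (\<lambda>s. delta c K (f s) k - delta c K (g s) k)"
      using F[OF t k] G[OF t k] integral_diff[OF intf intg] by simp
    also have "\<bar>\<dots>\<bar> \<le> integral {0..t} (\<lambda>s. 2 * c * B * L ^ m / fact m * s ^ m)"
    proof (rule integral_norm_bound_integral[where 'a=real, unfolded real_norm_def])
      show "(\<lambda>s. delta c K (f s) k - delta c K (g s) k) integrable_on {0..t}"
        using intf intg by (rule integrable_diff)
      show "(\<lambda>s. 2 * c * B * L ^ m / fact m * s ^ m) integrable_on {0..t}"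
        using hp by blast
      fix s assume s: "s \<in> {0..t}"
      then have s1: "s \<in> {0..1}" using t by auto
      have "\<bar>delta c K (f s) k - delta c K (g s) k\<bar> \<le> 2 * c * dsum K (f s) (g s)"
        using c fnn[OF s1] gnn[OF s1] k by (intro delta_lip) auto
      also have "\<dots> \<le> 2 * c * (B * (L * s) ^ m / fact m)"
        using mult_left_mono[OF bd[OF s1], of "2*c"] c by (simp add: L_def)
      also have "\<dots> = 2 * c * B * L ^ m / fact m * s ^ m"
        by (simp add: power_mult_distrib)
      finally show "\<bar>delta c K (f s) k - delta c K (g s) k\<bar> \<le> 2 * c * B * L ^ m / fact m * s ^ m" .
    qed
    also have "\<dots> = 2 * c * B * L ^ m / fact m * (t ^ Suc m / Suc m)"
      using hp by (rule integral_unique)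
    finally show ?thesis .
  qed
  have "dsum K (F t) (G t) \<le> (\<Sum>k=1..K. 2 * c * B * L ^ m / fact m * (t ^ Suc m / Suc m))"
    unfolding dsum_def by (intro sum_mono one) auto
  also have "\<dots> = B * (L * t) ^ Suc m / fact (Suc m)"
    by (simp add: L_def power_mult_distrib field_simps del: of_nat_Suc)
  finally show ?thesis by (simp add: L_def)
qed

primrec pic :: "real \<Rightarrow> nat \<Rightarrow> nat \<Rightarrow> real \<Rightarrow> nat \<Rightarrow> real" where
  "pic c K 0 = (\<lambda>t k. 0)"
| "pic c K (Suc m) = (\<lambda>t k. integral {0..t} (\<lambda>s. delta c K (pic c K m s) k))"

lemma pic_props:
  assumes c: "c > 0"
  shows "(\<forall>i\<in>{1..K}. \<forall>t\<in>{0..1}. 0 \<le> pic c K m t i \<and> pic c K m t i \<le> t) \<and>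
         (\<forall>i\<in>{1..K}. 1-lipschitz_on {0..1} (\<lambda>s. pic c K m s i))"
proof (induction m)
  case 0
  then show ?case by (auto intro: lipschitz_on_le[OF lipschitz_on_constant])
next
  case (Suc m)
  have cont: "continuous_on {0..1} (\<lambda>s. pic c K m s i)" if "i \<in> {1..K}" for i
    using Suc.IH that lipschitz_on_continuous_on by blast
  have *: "(\<forall>t\<in>{0..1}. 0 \<le> pic c K (Suc m) t i \<and> pic c K (Suc m) t i \<le> t) \<and>
         1-lipschitz_on {0..1} (\<lambda>s. pic c K (Suc m) s i)" if i: "i \<in> {1..K}" for i
  proof -
    let ?g = "\<lambda>s. delta c K (pic c K m s) i"
    have g01: "0 \<le> ?g s \<and> ?g s \<le> 1" if "s \<in> {0..1}" for s
      using delta_bounds[OF c, of K "pic c K m s" i] Suc.IH that i by auto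
    have hi: "(?g has_integral pic c K (Suc m) t i) {0..t}" if "t \<in> {0..1}" for t
    proof -
      have "?g integrable_on {0..t}"
        using that i by (intro integrable_continuous_interval continuous_on_subset[OF delta_continuous[OF cont]]) auto
      then show ?thesis by (simp add: integrable_integral)
    qed
    show ?thesis using int_lip(1,3)[of ?g "\<lambda>t. pic c K (Suc m) t i", OF g01 hi] by blast
  qed
  then show ?case by blast
qed

lemma pic_diff:
  assumes c: "c > 0" and t: "t \<in> {0..1}"
  shows "dsum K (pic c K (Suc m) t) (pic c K m t) \<le> K * (2 * c * K * t) ^ m / fact m"
  using t
proof (induction m arbitrary: t)
  case 0
  have "dsum K (pic c K (Suc 0) t) (pic c K 0 t) \<le> (\<Sum>i=1..K. 1)"
    unfolding dsum_def
  proof (intro sum_mono)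
    fix i assume "i \<in> {1..K}"
    then have "0 \<le> pic c K (Suc 0) t i \<and> pic c K (Suc 0) t i \<le> t"
      using pic_props[OF c, of K "Suc 0"] 0 by blast
    then show "\<bar>pic c K (Suc 0) t i - pic c K 0 t i\<bar> \<le> 1" using 0 by (simp del: pic.simps(2))
  qed
  then show ?case by simp
next
  case (Suc m)
  have cont: "continuous_on {0..1} (\<lambda>s. pic c K m s i)" if "i \<in> {1..K}" for m i
    using pic_props[OF c, of K m] that lipschitz_on_continuous_on by blast
  show ?case
  proof -
    have nn1: "\<And>s i. s\<in>{0..1} \<Longrightarrow> i\<in>{1..K} \<Longrightarrow> 0 \<le> pic c K (Suc m) s i"
      using pic_props[OF c, of K "Suc m"] by blast
    have nn0: "\<And>s i. s\<in>{0..1} \<Longrightarrow> i\<in>{1..K} \<Longrightarrow> 0 \<le> pic c K m s i"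
      using pic_props[OF c, of K m] by blast
    show ?thesis by (rule STEP[OF c _ nn1 nn0 cont cont _ _ Suc.IH Suc.prems]) simp_all
  qed
qed

lemma exp_term_lim: "(\<lambda>m. B * (x::real) ^ m / fact m) \<longlonglongrightarrow> 0"
proof -
  have "(\<lambda>m. inverse (fact m) * x ^ m) \<longlonglongrightarrow> 0"
    using summable_exp[of x] by (rule summable_LIMSEQ_zero)
  then have "(\<lambda>m. B * (inverse (fact m) * x ^ m)) \<longlonglongrightarrow> B * 0"
    by (intro tendsto_intros)
  then show ?thesis by (simp add: field_simps)
qed

definition ode_sol :: "real \<Rightarrow> nat \<Rightarrow> real \<Rightarrow> nat \<Rightarrow> real" where
  "ode_sol c K t i = (\<Sum>m. pic c K (Suc m) t i - pic c K m t i)"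

lemma pic_conv:
  assumes c: "c > 0" and t: "t \<in> {0..1}" and i: "i \<in> {1..K}"
  shows "(\<lambda>m. pic c K m t i) \<longlonglongrightarrow> ode_sol c K t i"
proof -
  define L where "L = 2 * c * K"
  have L0: "L \<ge> 0" using c by (simp add: L_def)
  have bd: "norm (pic c K (Suc m) t i - pic c K m t i) \<le> K * L ^ m / fact m" for m
  proof -
    have "norm (pic c K (Suc m) t i - pic c K m t i) \<le> dsum K (pic c K (Suc m) t) (pic c K m t)"
      unfolding dsum_def real_norm_def using i by (intro member_le_sum) auto
    also have "\<dots> \<le> K * (L * t) ^ m / fact m" using pic_diff[OF c t] by (simp add: L_def)
    also have "\<dots> \<le> K * L ^ m / fact m"
      using t L0 by (intro divide_right_mono mult_left_mono power_mono) (auto intro: mult_left_le)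
    finally show ?thesis .
  qed
  have "summable (\<lambda>m. K * (inverse (fact m) * L ^ m))"
    by (intro summable_mult summable_exp)
  then have "summable (\<lambda>m. K * L ^ m / fact m)" by (simp add: field_simps)
  then have "summable (\<lambda>m. pic c K (Suc m) t i - pic c K m t i)"
    by (rule summable_comparison_test[rotated]) (use bd in auto)
  then have "(\<lambda>n. \<Sum>m<n. pic c K (Suc m) t i - pic c K m t i) \<longlonglongrightarrow> ode_sol c K t i"
    unfolding ode_sol_def by (rule summable_LIMSEQ)
  then show ?thesis using sum_lessThan_telescope[of "\<lambda>m. pic c K m t i"] by (simp del: pic.simps(2))
qed

lemma ode_sol_props:
  assumes c: "c > 0"
  shows "\<And>t i. t \<in> {0..1} \<Longrightarrow> i \<in> {1..K} \<Longrightarrow> 0 \<le> ode_sol c K t i \<and> ode_sol c K t i \<le> t"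
    and "\<And>i. i \<in> {1..K} \<Longrightarrow> 1-lipschitz_on {0..1} (\<lambda>s. ode_sol c K s i)"
proof -
  fix t :: real and i assume t: "t \<in> {0..1}" and i: "i \<in> {1..K}"
  show "0 \<le> ode_sol c K t i \<and> ode_sol c K t i \<le> t"
  proof
    show "0 \<le> ode_sol c K t i"
      using pic_props[OF c, of K] t i by (intro LIMSEQ_le_const[OF pic_conv[OF c t i]]) auto
    show "ode_sol c K t i \<le> t"
      using pic_props[OF c, of K] t i by (intro LIMSEQ_le_const2[OF pic_conv[OF c t i]]) auto
  qed
next
  fix i assume i: "i \<in> {1..K}"
  show "1-lipschitz_on {0..1} (\<lambda>s. ode_sol c K s i)"
  proof (rule lipschitz_onI)
    fix x y :: real assume xy: "x \<in> {0..1}" "y \<in> {0..1}"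
    have "(\<lambda>m. dist (pic c K m x i) (pic c K m y i)) \<longlonglongrightarrow> dist (ode_sol c K x i) (ode_sol c K y i)"
      using pic_conv[OF c xy(1) i] pic_conv[OF c xy(2) i] by (intro tendsto_intros)
    moreover have "dist (pic c K m x i) (pic c K m y i) \<le> 1 * dist x y" for m
      using pic_props[OF c, of K m] i xy by (auto dest!: lipschitz_onD)
    ultimately show "dist (ode_sol c K x i) (ode_sol c K y i) \<le> 1 * dist x y"
      by (intro LIMSEQ_le_const2) auto
  qed simp
qed

lemma ode_sol_solves:
  assumes c: "c > 0"
  shows "solves_tetris_ode c K (ode_sol c K)"
  unfolding solves_tetris_ode_def
proof (intro ballI)
  fix t :: real and k assume t: "t \<in> {0..1}" and k: "k \<in> {1..K}"
  have cont: "continuous_on {0..1} (\<lambda>s. pic c K m s i)" if "i \<in> {1..K}" for m i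
    using pic_props[OF c, of K m] that lipschitz_on_continuous_on by blast
  have intm: "(\<lambda>s. delta c K (pic c K m s) k) integrable_on {0..t}" for m
    using t k by (intro integrable_continuous_interval continuous_on_subset[OF delta_continuous[OF cont]]) auto
  have conv: "(\<lambda>m. delta c K (pic c K m s) k) \<longlonglongrightarrow> delta c K (ode_sol c K s) k" if s: "s \<in> {0..t}" for s
  proof -
    have s1: "s \<in> {0..1}" using s t by auto
    have pc: "(\<lambda>m. pic c K m s i) \<longlonglongrightarrow> ode_sol c K s i" if "i \<in> {1..K}" for i
      using pic_conv[OF c s1 that] .
    show ?thesis
    proof (cases "k = 1")
      case True
      then show ?thesis unfolding delta_def using pc by (auto intro!: tendsto_intros)
    next
      case False
      then have "k - 1 \<in> {1..K}" using k by auto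
      then show ?thesis unfolding delta_def using pc False k by (auto intro!: tendsto_intros)
    qed
  qed
  have bnd: "norm (delta c K (pic c K m s) k) \<le> 1" if "s \<in> {0..t}" for m s
    using delta_bounds[OF c, of K "pic c K m s" k] pic_props[OF c, of K m] that t k by auto
  have dc: "(\<lambda>s. delta c K (ode_sol c K s) k) integrable_on {0..t}"
     "(\<lambda>m. integral {0..t} (\<lambda>s. delta c K (pic c K m s) k)) \<longlonglongrightarrow> integral {0..t} (\<lambda>s. delta c K (ode_sol c K s) k)"
    using dominated_convergence[of "\<lambda>m s. delta c K (pic c K m s) k" "{0..t}" "\<lambda>_. 1", OF intm _ bnd conv] 
    by auto
  have "(\<lambda>m. pic c K (Suc m) t k) \<longlonglongrightarrow> integral {0..t} (\<lambda>s. delta c K (ode_sol c K s) k)"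
    using dc(2) by simp
  moreover have "(\<lambda>m. pic c K (Suc m) t k) \<longlonglongrightarrow> ode_sol c K t k"
    using pic_conv[OF c t k] by (rule LIMSEQ_Suc)
  ultimately have "ode_sol c K t k = integral {0..t} (\<lambda>s. delta c K (ode_sol c K s) k)"
    using LIMSEQ_unique by blast
  then show "((\<lambda>s. delta c K (ode_sol c K s) k) has_integral ode_sol c K t k) {0..t}"
    using dc(1) by (simp add: integrable_integral)
qed

lemma solution_props:
  assumes c: "c > 0" and sol: "solves_tetris_ode c K \<beta>"
  shows "\<And>t i. t \<in> {0..1} \<Longrightarrow> i \<in> {1..K} \<Longrightarrow> 0 \<le> \<beta> t i \<and> \<beta> t i \<le> t"
    and "\<And>i. i \<in> {1..K} \<Longrightarrow> 1-lipschitz_on {0..1} (\<lambda>s. \<beta> s i)"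
proof -
  have hi: "((\<lambda>s. delta c K (\<beta> s) k) has_integral \<beta> t k) {0..t}" if "t \<in> {0..1}" "k \<in> {1..K}" for t :: real and k
    using sol that unfolding solves_tetris_ode_def by blast
  have nn: "\<forall>t\<in>{0..1}. 0 \<le> \<beta> t k" if "k \<in> {1..K}" for k
    using that
  proof (induction k rule: less_induct)
    case (less k)
    show ?case
    proof
      fix t :: real assume t: "t \<in> {0..1}"
      show "0 \<le> \<beta> t k"
      proof (rule has_integral_nonneg[OF hi[OF t less.prems]])
        fix s assume s: "s \<in> {0..t}"
        show "0 \<le> delta c K (\<beta> s) k"
        proof (cases "k = 1")
          case True then show ?thesis by (simp add: delta_def)
        next
          case False
          then have "k - 1 \<in> {1..K}" "k - 1 < k" using less.prems by auto
          then have "0 \<le> \<beta> s (k - 1)" using less.IH s t by auto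
          then have "exp (- c * \<beta> s (k - 1)) \<le> 1" using c by simp
          then show ?thesis using False by (simp add: delta_def)
        qed
      qed
    qed
  qed
  have g01: "0 \<le> delta c K (\<beta> s) i \<and> delta c K (\<beta> s) i \<le> 1" if "s \<in> {0..1}" "i \<in> {1..K}" for s i
    using delta_bounds[OF c, of K "\<beta> s" i] nn that by auto
  fix t :: real and i assume "t \<in> {0..1}" "i \<in> {1..K}"
  then show "0 \<le> \<beta> t i \<and> \<beta> t i \<le> t"
    using int_lip(1)[of "\<lambda>s. delta c K (\<beta> s) i" "\<lambda>t. \<beta> t i", OF g01 hi] by blast
next
  have hi: "((\<lambda>s. delta c K (\<beta> s) k) has_integral \<beta> t k) {0..t}" if "t \<in> {0..1}" "k \<in> {1..K}" for t :: real and k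
    using sol that unfolding solves_tetris_ode_def by blast
  have nn: "\<forall>t\<in>{0..1}. 0 \<le> \<beta> t k" if "k \<in> {1..K}" for k
    using that
  proof (induction k rule: less_induct)
    case (less k)
    show ?case
    proof
      fix t :: real assume t: "t \<in> {0..1}"
      show "0 \<le> \<beta> t k"
      proof (rule has_integral_nonneg[OF hi[OF t less.prems]])
        fix s assume s: "s \<in> {0..t}"
        show "0 \<le> delta c K (\<beta> s) k"
        proof (cases "k = 1")
          case True then show ?thesis by (simp add: delta_def)
        next
          case False
          then have "k - 1 \<in> {1..K}" "k - 1 < k" using less.prems by auto
          then have "0 \<le> \<beta> s (k - 1)" using less.IH s t by auto
          then have "exp (- c * \<beta> s (k - 1)) \<le> 1" using c by simp
          then show ?thesis using False by (simp add: delta_def)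
        qed
      qed
    qed
  qed
  have g01: "0 \<le> delta c K (\<beta> s) i \<and> delta c K (\<beta> s) i \<le> 1" if "s \<in> {0..1}" "i \<in> {1..K}" for s i
    using delta_bounds[OF c, of K "\<beta> s" i] nn that by auto
  fix i assume "i \<in> {1..K}"
  then show "1-lipschitz_on {0..1} (\<lambda>s. \<beta> s i)"
    using int_lip(3)[of "\<lambda>s. delta c K (\<beta> s) i" "\<lambda>t. \<beta> t i", OF g01 hi] by blast
qed

lemma solution_unique:
  assumes c: "c > 0" and sa: "solves_tetris_ode c K \<alpha>" and sb: "solves_tetris_ode c K \<beta>"
    and t: "t \<in> {0..1}" and k: "k \<in> {1..K}"
  shows "\<beta> t k = \<alpha> t k"
proof -
  have hia: "((\<lambda>s. delta c K (\<alpha> s) k) has_integral \<alpha> t k) {0..t}" if "t \<in> {0..1}" "k \<in> {1..K}" for t k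
    using sa that unfolding solves_tetris_ode_def by blast
  have hib: "((\<lambda>s. delta c K (\<beta> s) k) has_integral \<beta> t k) {0..t}" if "t \<in> {0..1}" "k \<in> {1..K}" for t k
    using sb that unfolding solves_tetris_ode_def by blast
  have bd: "dsum K (\<beta> t) (\<alpha> t) \<le> K * (2 * c * K * t) ^ m / fact m" if "t \<in> {0..1}" for m t
    using that
  proof (induction m arbitrary: t)
    case 0
    have "dsum K (\<beta> t) (\<alpha> t) \<le> (\<Sum>i=1..K. 1)"
      unfolding dsum_def using solution_props(1)[OF c sa] solution_props(1)[OF c sb] 0
      by (intro sum_mono) force
    then show ?case by simp
  next
    case (Suc m)
    show ?case
    proof (rule STEP[OF c _ _ _ _ _ _ _ Suc.IH Suc.prems])
      show "\<And>s i. s \<in> {0..1} \<Longrightarrow> i \<in> {1..K} \<Longrightarrow> 0 \<le> \<beta> s i"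
        using solution_props(1)[OF c sb] by blast
      show "\<And>s i. s \<in> {0..1} \<Longrightarrow> i \<in> {1..K} \<Longrightarrow> 0 \<le> \<alpha> s i"
        using solution_props(1)[OF c sa] by blast
      show "\<And>i. i \<in> {1..K} \<Longrightarrow> continuous_on {0..1} (\<lambda>s. \<beta> s i)"
        using solution_props(2)[OF c sb] lipschitz_on_continuous_on by blast
      show "\<And>i. i \<in> {1..K} \<Longrightarrow> continuous_on {0..1} (\<lambda>s. \<alpha> s i)"
        using solution_props(2)[OF c sa] lipschitz_on_continuous_on by blast
      show "\<And>t k. t \<in> {0..1} \<Longrightarrow> k \<in> {1..K} \<Longrightarrow> \<beta> t k = integral {0..t} (\<lambda>s. delta c K (\<beta> s) k)"
        using hib integral_unique by (metis)
      show "\<And>t k. t \<in> {0..1} \<Longrightarrow> k \<in> {1..K} \<Longrightarrow> \<alpha> t k = integral {0..t} (\<lambda>s. delta c K (\<alpha> s) k)"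
        using hia integral_unique by (metis)
    qed simp
  qed
  have lim: "(\<lambda>m. real K * (2 * c * K * t) ^ m / fact m) \<longlonglongrightarrow> 0" by (rule exp_term_lim)
  have "dsum K (\<beta> t) (\<alpha> t) \<le> 0"
    by (rule LIMSEQ_le_const[OF lim]) (use bd[OF t] in auto)
  moreover have "\<bar>\<beta> t k - \<alpha> t k\<bar> \<le> dsum K (\<beta> t) (\<alpha> t)"
    unfolding dsum_def using k by (intro member_le_sum) auto
  ultimately show ?thesis by simp
qed

fun gtraj :: "('s \<Rightarrow> 's pmf) \<Rightarrow> 's \<Rightarrow> nat \<Rightarrow> 's list pmf" where
  "gtraj st x0 0 = return_pmf [x0]"
| "gtraj st x0 (Suc t) = do { xs \<leftarrow> gtraj st x0 t; h \<leftarrow> st (last xs); return_pmf (xs @ [h]) }"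

lemma expl_traj_gtraj: "expl_traj n p K t = gtraj (expl_step n p K) expl_init t"
  by (induction t) auto

lemma gtraj_support:
  assumes "xs \<in> set_pmf (gtraj st x0 t)"
  shows "length xs = Suc t \<and> xs ! 0 = x0 \<and> (\<forall>s<t. xs ! Suc s \<in> set_pmf (st (xs ! s)))"
  using assms
proof (induction t arbitrary: xs)
  case 0
  then show ?case by simp
next
  case (Suc t)
  then obtain ys h where ys: "ys \<in> set_pmf (gtraj st x0 t)" and h: "h \<in> set_pmf (st (last ys))"
    and xs: "xs = ys @ [h]" by auto
  note IH = Suc.IH[OF ys]
  have "ys \<noteq> []" using IH by auto
  then have lys: "last ys = ys ! t" using IH by (simp add: last_conv_nth)
  show ?case
  proof (intro conjI allI impI)
    show "length xs = Suc (Suc t)" using IH xs by simp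
    show "xs ! 0 = x0" using IH xs by (simp add: nth_append)
    fix s assume s: "s < Suc t"
    show "xs ! Suc s \<in> set_pmf (st (xs ! s))"
    proof (cases "s = t")
      case True then show ?thesis using IH xs h lys by (simp add: nth_append)
    next
      case False then show ?thesis using IH xs s by (simp add: nth_append)
    qed
  qed
qed

lemma gtraj_finite:
  assumes "\<And>x. finite (set_pmf (st x))"
  shows "finite (set_pmf (gtraj st x0 t))"
proof (induction t)
  case 0 then show ?case by simp
next
  case (Suc t)
  have "set_pmf (gtraj st x0 (Suc t)) = (\<Union>xs\<in>set_pmf (gtraj st x0 t). (\<lambda>h. xs @ [h]) ` set_pmf (st (last xs)))"
    by (auto simp: set_bind_pmf)
  then show ?case using Suc assms by simp
qed

lemma gtraj_take:
  "map_pmf (take (Suc t)) (gtraj st x0 (t + m)) = gtraj st x0 t"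
proof (induction m)
  case 0
  have "map_pmf (take (Suc t)) (gtraj st x0 t) = map_pmf id (gtraj st x0 t)"
    by (intro map_pmf_cong refl) (use gtraj_support in fastforce)
  then show ?case by simp
next
  case (Suc m)
  have "map_pmf (take (Suc t)) (gtraj st x0 (t + Suc m)) =
        do { xs \<leftarrow> gtraj st x0 (t + m); h \<leftarrow> st (last xs); return_pmf (take (Suc t) (xs @ [h])) }"
    by (simp add: map_bind_pmf)
  also have "\<dots> = do { xs \<leftarrow> gtraj st x0 (t + m); h \<leftarrow> st (last xs); return_pmf (take (Suc t) xs) }"
    by (intro bind_pmf_cong refl) (use gtraj_support in fastforce)
  also have "\<dots> = map_pmf (take (Suc t)) (gtraj st x0 (t + m))"
    by (simp add: map_pmf_def bind_return_pmf' bind_pmf_const)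
  also have "\<dots> = gtraj st x0 t" by (rule Suc.IH)
  finally show ?case .
qed

lemma E_bind:
  fixes f :: "'b \<Rightarrow> real"
  assumes "finite (set_pmf M)" "\<And>x. x \<in> set_pmf M \<Longrightarrow> finite (set_pmf (N x))"
  shows "measure_pmf.expectation (M \<bind> N) f = measure_pmf.expectation M (\<lambda>x. measure_pmf.expectation (N x) f)"
proof -
  have "measure_pmf.expectation (M \<bind> N) f = (\<Sum>a\<in>set_pmf M. pmf M a *\<^sub>R measure_pmf.expectation (N a) f)"
    using assms by (intro pmf_expectation_bind) auto
  also have "\<dots> = measure_pmf.expectation M (\<lambda>x. measure_pmf.expectation (N x) f)"
    using assms by (subst integral_measure_pmf[of "set_pmf M"]) (auto simp: mult.commute)
  finally show ?thesis .
qed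

definition qexp :: "('s \<Rightarrow> 's pmf) \<Rightarrow> ('s \<Rightarrow> real) \<Rightarrow> 's \<Rightarrow> real" where
  "qexp st g x = measure_pmf.expectation (st x) (\<lambda>y. g y - g x)"

definition mart :: "('s \<Rightarrow> 's pmf) \<Rightarrow> ('s \<Rightarrow> real) \<Rightarrow> nat \<Rightarrow> 's list \<Rightarrow> real" where
  "mart st g t xs = g (xs ! t) - g (xs ! 0) - (\<Sum>s<t. qexp st g (xs ! s))"

lemma mart_variance:
  fixes g :: "'s \<Rightarrow> real"
  assumes fin: "\<And>x. finite (set_pmf (st x))"
    and inc: "\<And>x y. y \<in> set_pmf (st x) \<Longrightarrow> 0 \<le> g y - g x \<and> g y - g x \<le> 1"
  shows "measure_pmf.expectation (gtraj st x0 t) (\<lambda>xs. (mart st g t xs)\<^sup>2) \<le> t"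
proof (induction t)
  case 0 then show ?case by (simp add: mart_def)
next
  case (Suc t)
  have q01: "0 \<le> qexp st g x \<and> qexp st g x \<le> 1" for x
  proof -
    have "0 \<le> qexp st g x" unfolding qexp_def
      using inc by (intro integral_nonneg_AE) (auto simp: AE_measure_pmf_iff)
    moreover have "qexp st g x \<le> measure_pmf.expectation (st x) (\<lambda>_. 1::real)" unfolding qexp_def
      using inc fin by (intro integral_mono_AE) (auto simp: AE_measure_pmf_iff integrable_measure_pmf_finite)
    ultimately show ?thesis by simp
  qed
  define D where "D x y = g y - g x - qexp st g x" for x y
  have ED: "measure_pmf.expectation (st x) (D x) = 0" for x
  proof -
    have "measure_pmf.expectation (st x) (D x) = measure_pmf.expectation (st x) (\<lambda>y. g y - g x) - qexp st g x"
      unfolding D_def using fin by (subst Bochner_Integration.integral_diff) (auto simp: integrable_measure_pmf_finite)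
    then show ?thesis by (simp add: qexp_def)
  qed
  have D1: "(D x y)\<^sup>2 \<le> 1" if "y \<in> set_pmf (st x)" for x y
  proof -
    have "\<bar>D x y\<bar> \<le> 1" using inc[OF that] q01[of x] by (auto simp: D_def abs_le_iff)
    then show ?thesis by (simp add: abs_le_square_iff[symmetric] power2_eq_square)
         (metis abs_ge_zero abs_mult_self_eq mult_le_one)
  qed
  have inner: "measure_pmf.expectation (st x) (\<lambda>y. (m + D x y)\<^sup>2) \<le> m\<^sup>2 + 1" for x m
  proof -
    have int: "integrable (measure_pmf (st x)) f" for f :: "'s \<Rightarrow> real"
      using fin by (rule integrable_measure_pmf_finite)
    have "measure_pmf.expectation (st x) (\<lambda>y. (m + D x y)\<^sup>2) =
          measure_pmf.expectation (st x) (\<lambda>y. m\<^sup>2 + (D x y)\<^sup>2 + 2 * m * D x y)"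
      by (simp add: power2_sum)
    also have "\<dots> = m\<^sup>2 + measure_pmf.expectation (st x) (\<lambda>y. (D x y)\<^sup>2) + 2 * m * measure_pmf.expectation (st x) (D x)"
      using int by simp
    also have "\<dots> = m\<^sup>2 + measure_pmf.expectation (st x) (\<lambda>y. (D x y)\<^sup>2)"
      by (simp add: ED)
    also have "measure_pmf.expectation (st x) (\<lambda>y. (D x y)\<^sup>2) \<le> measure_pmf.expectation (st x) (\<lambda>_. 1::real)"
      using D1 int by (intro integral_mono_AE) (auto simp: AE_measure_pmf_iff)
    finally show ?thesis by simp
  qed
  have step_eq: "mart st g (Suc t) (xs @ [h]) = mart st g t xs + D (last xs) h"
    if "xs \<in> set_pmf (gtraj st x0 t)" for xs h
  proof -
    have l: "length xs = Suc t" using gtraj_support[OF that] by blast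
    then have "last xs = xs ! t" by (metis diff_Suc_1 last_conv_nth list.size(3) nat.distinct(1))
    moreover have "(\<Sum>s<Suc t. qexp st g ((xs @ [h]) ! s)) = (\<Sum>s<Suc t. qexp st g (xs ! s))"
      using l by (intro sum.cong) (auto simp: nth_append)
    ultimately show ?thesis using l by (simp add: mart_def D_def nth_append)
  qed
  have finT: "finite (set_pmf (gtraj st x0 t))" by (rule gtraj_finite[OF fin])
  have "measure_pmf.expectation (gtraj st x0 (Suc t)) (\<lambda>xs. (mart st g (Suc t) xs)\<^sup>2) =
        measure_pmf.expectation (gtraj st x0 t) (\<lambda>xs. measure_pmf.expectation (st (last xs))
            (\<lambda>h. (mart st g (Suc t) (xs @ [h]))\<^sup>2))"
    using finT fin by (simp add: E_bind set_bind_pmf)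
  also have "\<dots> = measure_pmf.expectation (gtraj st x0 t) (\<lambda>xs. measure_pmf.expectation (st (last xs))
            (\<lambda>h. (mart st g t xs + D (last xs) h)\<^sup>2))"
    by (intro integral_cong_AE) (auto simp: AE_measure_pmf_iff step_eq)
  also have "\<dots> \<le> measure_pmf.expectation (gtraj st x0 t) (\<lambda>xs. (mart st g t xs)\<^sup>2 + 1)"
    using finT inner by (intro integral_mono_AE) (auto simp: integrable_measure_pmf_finite)
  also have "\<dots> = measure_pmf.expectation (gtraj st x0 t) (\<lambda>xs. (mart st g t xs)\<^sup>2) + 1"
    using finT by (subst Bochner_Integration.integral_add) (auto simp: integrable_measure_pmf_finite)
  also have "\<dots> \<le> t + 1" using Suc.IH by simp
  finally show ?case by simp
qed

lemma mart_chebyshev: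
  fixes g :: "'s \<Rightarrow> real"
  assumes fin: "\<And>x. finite (set_pmf (st x))"
    and inc: "\<And>x y. y \<in> set_pmf (st x) \<Longrightarrow> 0 \<le> g y - g x \<and> g y - g x \<le> 1"
    and a: "a > 0" and tN: "t \<le> N"
  shows "measure_pmf.prob (gtraj st x0 N) {xs. a \<le> \<bar>mart st g t xs\<bar>} \<le> t / a\<^sup>2"
proof -
  obtain m where N: "N = t + m" using tN le_Suc_ex by blast
  have eqm: "mart st g t (take (Suc t) xs) = mart st g t xs" if "xs \<in> set_pmf (gtraj st x0 N)" for xs
  proof -
    have "length xs = Suc N" using gtraj_support[OF that] by blast
    then show ?thesis unfolding mart_def using tN by (simp add: nth_take)
  qed
  have "measure_pmf.prob (gtraj st x0 N) {xs. a \<le> \<bar>mart st g t xs\<bar>} =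
        measure_pmf.prob (gtraj st x0 N) {xs. a \<le> \<bar>mart st g t (take (Suc t) xs)\<bar>}"
    by (rule measure_pmf.finite_measure_eq_AE) (auto simp: AE_measure_pmf_iff eqm)
  also have "\<dots> = measure_pmf.prob (map_pmf (take (Suc t)) (gtraj st x0 N)) {xs. a \<le> \<bar>mart st g t xs\<bar>}"
    by simp
  also have "\<dots> = measure_pmf.prob (gtraj st x0 t) {xs. a \<le> \<bar>mart st g t xs\<bar>}"
    unfolding N gtraj_take ..
  also have "\<dots> \<le> measure_pmf.expectation (gtraj st x0 t) (\<lambda>xs. (mart st g t xs)\<^sup>2) / a\<^sup>2"
    using measure_pmf.second_moment_method[of "\<lambda>xs. mart st g t xs" "gtraj st x0 t" a] a
      gtraj_finite[OF fin] by (simp add: integrable_measure_pmf_finite)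
  also have "\<dots> \<le> t / a\<^sup>2"
    using mart_variance[OF fin inc] by (intro divide_right_mono) auto
  finally show ?thesis .
qed

definition cls :: "nat \<Rightarrow> nat \<Rightarrow> nat" where
  "cls K j = (if j \<le> K - 1 then j + 1 else 0)"

definition jmax :: "nat \<Rightarrow> expl_state \<Rightarrow> (nat \<Rightarrow> bool) \<Rightarrow> nat" where
  "jmax n h J = Max (insert 0 {k. \<exists>w\<in>explored n h. J w \<and> h w = Some k})"

definition Jpmf :: "nat \<Rightarrow> real \<Rightarrow> expl_state \<Rightarrow> (nat \<Rightarrow> bool) pmf" where
  "Jpmf n p h = Pi_pmf (explored n h) False (\<lambda>_. bernoulli_pmf p)"

definition Xd :: "nat \<Rightarrow> real \<Rightarrow> nat \<Rightarrow> expl_state \<Rightarrow> nat pmf" where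
  "Xd n p K h = map_pmf (\<lambda>J. cls K (jmax n h J)) (Jpmf n p h)"

definition goodK :: "nat \<Rightarrow> nat \<Rightarrow> expl_state \<Rightarrow> bool" where
  "goodK n K h \<longleftrightarrow> (\<forall>v. n \<le> v \<longrightarrow> h v = None) \<and> (\<forall>v j. h v = Some j \<longrightarrow> j \<le> K)"

lemma finite_explored[simp]: "finite (explored n h)"
  unfolding explored_def by auto

lemma finite_unexplored[simp]: "finite (unexplored n h)"
  unfolding unexplored_def by auto

lemma step_alt:
  assumes "unexplored n h \<noteq> {}"
  shows "expl_step n p K h = do { v \<leftarrow> pmf_of_set (unexplored n h); x \<leftarrow> Xd n p K h; return_pmf (h(v := Some x)) }"
  using assms unfolding expl_step_def Xd_def Jpmf_def jmax_def cls_def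
  by (simp add: Let_def bind_map_pmf o_def)

lemma step_empty:
  assumes "unexplored n h = {}"
  shows "expl_step n p K h = return_pmf h"
  using assms unfolding expl_step_def by simp

lemma cls_le: "K \<ge> 1 \<Longrightarrow> cls K j \<le> K"
  unfolding cls_def by auto

lemma set_Xd: "K \<ge> 1 \<Longrightarrow> set_pmf (Xd n p K h) \<subseteq> {..K}"
  unfolding Xd_def using cls_le by auto

lemma set_step:
  assumes "K \<ge> 1" "y \<in> set_pmf (expl_step n p K h)"
  shows "(unexplored n h = {} \<and> y = h) \<or> (\<exists>v\<in>unexplored n h. \<exists>x\<le>K. y = h(v := Some x))"
proof (cases "unexplored n h = {}")
  case True then show ?thesis using assms by (simp add: step_empty)
next
  case False
  then show ?thesis using assms set_Xd[OF assms(1), of n p h]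
    by (auto simp: step_alt set_bind_pmf)
qed

lemma finite_set_step:
  assumes "K \<ge> 1"
  shows "finite (set_pmf (expl_step n p K h))"
proof -
  have "set_pmf (expl_step n p K h) \<subseteq> insert h ((\<lambda>(v, x). h(v := Some x)) ` (unexplored n h \<times> {..K}))"
    using set_step[OF assms] by fastforce
  moreover have "finite (insert h ((\<lambda>(v, x). h(v := Some x)) ` (unexplored n h \<times> {..K})))" by simp
  ultimately show ?thesis by (rule finite_subset)
qed

lemma goodK_step:
  assumes "K \<ge> 1" "goodK n K h" "y \<in> set_pmf (expl_step n p K h)"
  shows "goodK n K y"
  using set_step[OF assms(1,3)] assms(2) unfolding goodK_def unexplored_def by (auto split: if_splits)

lemma A_count_upd:
  assumes "v \<in> unexplored n h"
  shows "A_count n (h(v := Some x)) k = A_count n h k + (if x = k then 1 else 0)"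
proof -
  have v: "v < n" "h v = None" using assms by (auto simp: unexplored_def)
  have fin: "finite {w. w < n \<and> h w = Some k}" by auto
  show ?thesis
  proof (cases "x = k")
    case True
    then have "{w. w < n \<and> (h(v := Some x)) w = Some k} = insert v {w. w < n \<and> h w = Some k}"
      using v by auto
    then show ?thesis unfolding A_count_def using True v fin by simp
  next
    case False
    then have "{w. w < n \<and> (h(v := Some x)) w = Some k} = {w. w < n \<and> h w = Some k}"
      using v by auto
    then show ?thesis unfolding A_count_def using False by simp
  qed
qed

lemma A_count_inc:
  assumes "K \<ge> 1" "y \<in> set_pmf (expl_step n p K h)"
  shows "0 \<le> real (A_count n y k) - real (A_count n h k) \<and> real (A_count n y k) - real (A_count n h k) \<le> 1"
  using set_step[OF assms] A_count_upd by auto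

lemma E_bind':
  fixes f :: "'b \<Rightarrow> real"
  assumes "finite (set_pmf M)" "\<And>x. x \<in> set_pmf M \<Longrightarrow> finite (set_pmf (N x))"
  shows "measure_pmf.expectation (bind_pmf M N) f = measure_pmf.expectation M (\<lambda>x. measure_pmf.expectation (N x) f)"
  using E_bind[OF assms] by simp

lemma qexp_step:
  assumes K: "K \<ge> 1" and U: "unexplored n h \<noteq> {}"
  shows "qexp (expl_step n p K) (\<lambda>h. real (A_count n h k)) h = pmf (Xd n p K h) k"
proof -
  have finX: "finite (set_pmf (Xd n p K h))" by (rule finite_subset[OF set_Xd[OF K]]) simp
  have "qexp (expl_step n p K) (\<lambda>h. real (A_count n h k)) h =
    measure_pmf.expectation (pmf_of_set (unexplored n h)) (\<lambda>v. measure_pmf.expectation (Xd n p K h)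
       (\<lambda>x. measure_pmf.expectation (return_pmf (h(v := Some x))) (\<lambda>y. real (A_count n y k) - real (A_count n h k))))"
  proof -
    let ?f = "\<lambda>y. real (A_count n y k) - real (A_count n h k)"
    have fin1: "finite (set_pmf (pmf_of_set (unexplored n h)))" using U by simp
    have fin2: "finite (set_pmf (Xd n p K h \<bind> (\<lambda>x. return_pmf (h(v := Some x)))))" for v
      using finX by (simp add: set_bind_pmf)
    have "qexp (expl_step n p K) (\<lambda>h. real (A_count n h k)) h =
       measure_pmf.expectation (pmf_of_set (unexplored n h) \<bind> (\<lambda>v. Xd n p K h \<bind> (\<lambda>x. return_pmf (h(v := Some x))))) ?f"
      unfolding qexp_def step_alt[OF U] by (rule refl)
    also have "\<dots> = measure_pmf.expectation (pmf_of_set (unexplored n h)) (\<lambda>v. 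
        measure_pmf.expectation (Xd n p K h \<bind> (\<lambda>x. return_pmf (h(v := Some x)))) ?f)"
      by (rule E_bind'[OF fin1 fin2])
    also have "\<dots> = measure_pmf.expectation (pmf_of_set (unexplored n h)) (\<lambda>v. 
        measure_pmf.expectation (Xd n p K h) (\<lambda>x. measure_pmf.expectation (return_pmf (h(v := Some x))) ?f))"
    proof (rule Bochner_Integration.integral_cong[OF refl])
      fix v
      show "measure_pmf.expectation (Xd n p K h \<bind> (\<lambda>x. return_pmf (h(v := Some x)))) ?f =
        measure_pmf.expectation (Xd n p K h) (\<lambda>x. measure_pmf.expectation (return_pmf (h(v := Some x))) ?f)"
        by (rule E_bind'[OF finX]) simp
    qed
    finally show ?thesis .
  qed
  also have "\<dots> = measure_pmf.expectation (pmf_of_set (unexplored n h)) (\<lambda>v. measure_pmf.expectation (Xd n p K h)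
       (indicator {k}))"
  proof (rule integral_cong_AE)
    have "measure_pmf.expectation (Xd n p K h) (\<lambda>x. measure_pmf.expectation (return_pmf (h(v := Some x)))
            (\<lambda>y. real (A_count n y k) - real (A_count n h k))) = measure_pmf.expectation (Xd n p K h) (indicator {k})"
      if v: "v \<in> unexplored n h" for v
    proof (rule Bochner_Integration.integral_cong[OF refl])
      fix x
      show "measure_pmf.expectation (return_pmf (h(v := Some x))) (\<lambda>y. real (A_count n y k) - real (A_count n h k))
            = indicator {k} x"
        using A_count_upd[OF v, of x k] by (simp add: indicator_def)
    qed
    then show "AE v in measure_pmf (pmf_of_set (unexplored n h)).
      measure_pmf.expectation (Xd n p K h) (\<lambda>x. measure_pmf.expectation (return_pmf (h(v := Some x)))
            (\<lambda>y. real (A_count n y k) - real (A_count n h k))) = measure_pmf.expectation (Xd n p K h) (indicator {k})"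
      using U by (simp add: AE_measure_pmf_iff)
  qed simp_all
  also have "\<dots> = pmf (Xd n p K h) k"
    by (simp add: measure_pmf_single)
  finally show ?thesis .
qed

definition cnt :: "nat \<Rightarrow> expl_state \<Rightarrow> nat \<Rightarrow> nat" where
  "cnt n h m = card {w. w < n \<and> (\<exists>j. h w = Some j \<and> m < j)}"

lemma prob_jmax_le:
  assumes p: "0 \<le> p" "p \<le> 1"
  shows "measure_pmf.prob (Jpmf n p h) {J. jmax n h J \<le> m} = (1 - p) ^ cnt n h m"
proof -
  define B where "B = {w. w < n \<and> (\<exists>j. h w = Some j \<and> m < j)}"
  have BE: "B \<subseteq> explored n h" unfolding B_def explored_def by auto
  define Bf where "Bf w = (if w \<in> B then {False} else UNIV)" for w
  have fin: "finite {k. \<exists>w\<in>explored n h. J w \<and> h w = Some k}" for J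
  proof -
    have "{k. \<exists>w\<in>explored n h. J w \<and> h w = Some k} \<subseteq> (\<lambda>w. the (h w)) ` explored n h" by force
    then show ?thesis by (rule finite_subset) simp
  qed
  have ev: "{J. jmax n h J \<le> m} = Pi (explored n h) Bf"
  proof -
    have "jmax n h J \<le> m \<longleftrightarrow> (\<forall>w\<in>explored n h. J w \<in> Bf w)" for J
    proof -
      have "jmax n h J \<le> m \<longleftrightarrow> (\<forall>k\<in>{k. \<exists>w\<in>explored n h. J w \<and> h w = Some k}. k \<le> m)"
        unfolding jmax_def using fin[of J] by simp
      also have "\<dots> \<longleftrightarrow> (\<forall>w\<in>explored n h. J w \<in> Bf w)"
        unfolding Bf_def B_def explored_def by (auto simp: not_less) (metis not_le)+
      finally show ?thesis .
    qed
    then show ?thesis by (auto simp: Pi_def)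
  qed
  have "measure_pmf.prob (Jpmf n p h) {J. jmax n h J \<le> m} = (\<Prod>w\<in>explored n h. measure_pmf.prob (bernoulli_pmf p) (Bf w))"
    unfolding ev Jpmf_def by (rule measure_Pi_pmf_Pi) simp
  also have "\<dots> = (\<Prod>w\<in>explored n h. if w \<in> B then 1 - p else 1)"
    using p by (intro prod.cong) (auto simp: Bf_def measure_pmf_single)
  also have "\<dots> = (1 - p) ^ card B"
    using BE by (simp add: prod.If_cases Int_absorb1)
  finally show ?thesis by (simp add: B_def cnt_def)
qed

lemma pmf_Xd:
  assumes p: "0 \<le> p" "p \<le> 1" and k: "k \<in> {1..K}"
  shows "pmf (Xd n p K h) k = (if k = 1 then (1 - p) ^ cnt n h 0
           else (1 - p) ^ cnt n h (k - 1) - (1 - p) ^ cnt n h (k - 2))"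
proof -
  have "pmf (Xd n p K h) k = measure_pmf.prob (Jpmf n p h) {J. cls K (jmax n h J) = k}"
    unfolding Xd_def by (simp add: pmf_map vimage_def)
  also have "{J. cls K (jmax n h J) = k} = {J. jmax n h J = k - 1}"
    using k unfolding cls_def by auto
  finally have eq: "pmf (Xd n p K h) k = measure_pmf.prob (Jpmf n p h) {J. jmax n h J = k - 1}" .
  show ?thesis
  proof (cases "k = 1")
    case True
    then show ?thesis using eq prob_jmax_le[OF p, of n h 0] by simp
  next
    case False
    then have "{J. jmax n h J = k - 1} = {J. jmax n h J \<le> k - 1} - {J. jmax n h J \<le> k - 2}"
      using k by auto
    then have "measure_pmf.prob (Jpmf n p h) {J. jmax n h J = k - 1} =
      measure_pmf.prob (Jpmf n p h) {J. jmax n h J \<le> k - 1} - measure_pmf.prob (Jpmf n p h) {J. jmax n h J \<le> k - 2}"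
    proof -
      have "{J. jmax n h J \<le> k - 1} \<inter> {J. jmax n h J \<le> k - 2} = {J. jmax n h J \<le> k - 2}" by auto
      then show ?thesis using \<open>{J. jmax n h J = k - 1} = _\<close> by (simp add: measure_pmf.finite_measure_Diff')
    qed
    then show ?thesis using eq prob_jmax_le[OF p] False by simp
  qed
qed

lemma cnt_sum:
  assumes "goodK n K h"
  shows "cnt n h m = (\<Sum>i=Suc m..K. A_count n h i)"
proof -
  have "{w. w < n \<and> (\<exists>j. h w = Some j \<and> m < j)} = (\<Union>i\<in>{Suc m..K}. {w. w < n \<and> h w = Some i})"
    using assms unfolding goodK_def by fastforce
  then have "cnt n h m = card (\<Union>i\<in>{Suc m..K}. {w. w < n \<and> h w = Some i})" by (simp add: cnt_def)
  also have "\<dots> = (\<Sum>i=Suc m..K. card {w. w < n \<and> h w = Some i})"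
    by (rule card_UN_disjoint) auto
  finally show ?thesis by (simp add: A_count_def)
qed

lemma expl_unexpl: "explored n h \<union> unexplored n h = {..<n}"
  unfolding explored_def unexplored_def by auto

lemma step_card:
  assumes K: "K \<ge> 1" and y: "y \<in> set_pmf (expl_step n p K h)" and c: "card (explored n h) = m" and m: "m \<le> n"
  shows "card (explored n y) = min (Suc m) n"
proof (cases "unexplored n h = {}")
  case True
  then have "explored n h = {..<n}" using expl_unexpl[of n h] by auto
  then have "m = n" using c by simp
  moreover have "y = h" using y True by (simp add: step_empty)
  ultimately show ?thesis using c by simp
next
  case False
  then obtain v x where v: "v \<in> unexplored n h" and yv: "y = h(v := Some x)"
    using set_step[OF K y] by auto
  have vn: "v < n" "h v = None" using v by (auto simp: unexplored_def)
  have "explored n y = insert v (explored n h)" using vn yv by (auto simp: explored_def)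
  moreover have "v \<notin> explored n h" using vn by (auto simp: explored_def)
  ultimately have cy: "card (explored n y) = Suc m" using c by simp
  moreover have "card (explored n y) \<le> n"
    using card_mono[of "{..<n}" "explored n y"] by (auto simp: explored_def)
  ultimately show ?thesis by simp
qed

lemma traj_inv:
  assumes K: "K \<ge> 1" and xs: "xs \<in> set_pmf (gtraj (expl_step n p K) expl_init N)" and s: "s \<le> N"
  shows "goodK n K (xs ! s) \<and> card (explored n (xs ! s)) = min s n"
  using s
proof (induction s)
  case 0
  have "xs ! 0 = expl_init" using gtraj_support[OF xs] by blast
  then show ?case by (simp add: goodK_def expl_init_def explored_def)
next
  case (Suc s)
  have y: "xs ! Suc s \<in> set_pmf (expl_step n p K (xs ! s))"
    using gtraj_support[OF xs] Suc.prems by auto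
  have IH: "goodK n K (xs ! s) \<and> card (explored n (xs ! s)) = min s n" using Suc by simp
  show ?case
  proof
    show "goodK n K (xs ! Suc s)" using goodK_step[OF K _ y] IH by blast
    show "card (explored n (xs ! Suc s)) = min (Suc s) n"
      using step_card[OF K y, of "min s n"] IH by (simp add: min_def split: if_splits)
  qed
qed

lemma traj_unexpl:
  assumes K: "K \<ge> 1" and xs: "xs \<in> set_pmf (gtraj (expl_step n p K) expl_init N)" and s: "s \<le> N" "s < n"
  shows "unexplored n (xs ! s) \<noteq> {}"
proof
  assume "unexplored n (xs ! s) = {}"
  then have "explored n (xs ! s) = {..<n}" using expl_unexpl[of n "xs ! s"] by auto
  then show False using traj_inv[OF K xs s(1)] s(2) by simp
qed

lemma A_count_init: "A_count n (xs ! 0) k = 0" if "xs ! 0 = expl_init"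
  using that by (simp add: A_count_def expl_init_def)

lemma pow_exp_bound:
  fixes x :: real
  assumes x: "0 \<le> x" "x \<le> 1/2"
  shows "\<bar>(1 - x) ^ m - exp (- (real m * x))\<bar> \<le> 2 * real m * x\<^sup>2"
proof -
  have pos: "0 < 1 - x" using x by simp
  have eq: "(1 - x) ^ m = exp (real m * ln (1 - x))"
    using pos by (simp add: exp_of_nat_mult)
  have lo: "- x - 2 * x\<^sup>2 \<le> ln (1 - x)" using ln_one_minus_pos_lower_bound[OF x] .
  have hi: "ln (1 - x) \<le> - x" using ln_one_minus_pos_upper_bound[of x] x by simp
  have e1: "exp (real m * ln (1 - x)) \<le> exp (- (real m * x))"
    using mult_left_mono[OF hi, of "real m"] by simp
  have e2: "exp (- (real m * x + 2 * real m * x\<^sup>2)) \<le> exp (real m * ln (1 - x))"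
    using mult_left_mono[OF lo, of "real m"] by (simp add: algebra_simps)
  have e3: "\<bar>exp (- 1 * (real m * x)) - exp (- 1 * (real m * x + 2 * real m * x\<^sup>2))\<bar> \<le> 1 * \<bar>real m * x - (real m * x + 2 * real m * x\<^sup>2)\<bar>"
    using x by (intro exp_lip) auto
  have f1: "(1 - x) ^ m \<le> exp (- (real m * x))" by (subst eq) (rule e1)
  have f2: "exp (- (real m * x + 2 * real m * x\<^sup>2)) \<le> (1 - x) ^ m" by (subst eq) (rule e2)
  have f3: "\<bar>exp (- (real m * x)) - exp (- (real m * x + 2 * real m * x\<^sup>2))\<bar> \<le> \<bar>real m * x - (real m * x + 2 * real m * x\<^sup>2)\<bar>"
    using e3 by simp
  have f4: "\<bar>real m * x - (real m * x + 2 * real m * x\<^sup>2)\<bar> = 2 * real m * x\<^sup>2" by simp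
  show ?thesis using f1 f2 f3 f4 by (smt (verit))
qed

lemma cnt_le:
  assumes "goodK n K h"
  shows "cnt n h m \<le> n"
  unfolding cnt_def using card_mono[of "{..<n}" "{w. w < n \<and> (\<exists>j. h w = Some j \<and> m < j)}"] by auto

lemma q_bound:
  assumes c: "c > 0" and K: "K \<ge> 1" and g: "goodK n K h" and U: "unexplored n h \<noteq> {}"
    and n: "real n \<ge> 2 * c" and k: "k \<in> {1..K}"
  shows "\<bar>qexp (expl_step n (c / real n) K) (\<lambda>h. real (A_count n h k)) h
          - delta c K (\<lambda>i. real (A_count n h i) / real n) k\<bar> \<le> 4 * c\<^sup>2 / real n"
proof -
  have n0: "real n > 0" using n c by linarith
  define x where "x = c / real n"
  have x: "0 \<le> x" "x \<le> 1/2" using c n n0 by (auto simp: x_def field_simps)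
  have one: "\<bar>(1 - x) ^ cnt n h m - exp (- c * (\<Sum>i=Suc m..K. real (A_count n h i) / real n))\<bar> \<le> 2 * c\<^sup>2 / real n" for m
  proof -
    have "exp (- c * (\<Sum>i=Suc m..K. real (A_count n h i) / real n)) = exp (- (real (cnt n h m) * x))"
      using cnt_sum[OF g, of m] by (simp add: x_def sum_divide_distrib[symmetric])
    moreover have "2 * real (cnt n h m) * x\<^sup>2 \<le> 2 * c\<^sup>2 / real n"
    proof -
      have "2 * real (cnt n h m) * x\<^sup>2 \<le> 2 * real n * x\<^sup>2"
        using cnt_le[OF g, of m] by (intro mult_right_mono) auto
      also have "\<dots> = 2 * c\<^sup>2 / real n" using n0 by (simp add: x_def power2_eq_square)
      finally show ?thesis .
    qed
    ultimately show ?thesis using pow_exp_bound[OF x, of "cnt n h m"] by simp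
  qed
  have p01': "0 \<le> x" "x \<le> 1" using x by auto
  note p01 = p01'[unfolded x_def]
  have q: "qexp (expl_step n (c / real n) K) (\<lambda>h. real (A_count n h k)) h = (if k = 1 then (1 - x) ^ cnt n h 0
           else (1 - x) ^ cnt n h (k - 1) - (1 - x) ^ cnt n h (k - 2))"
    using qexp_step[OF K U] pmf_Xd[OF p01 k] by (simp add: x_def)
  show ?thesis
  proof (cases "k = 1")
    case True
    then show ?thesis using q one[of 0] c n0 by (simp add: delta_def)
  next
    case False
    then have k2: "k \<ge> 2" using k by auto
    have s1: "Suc (k - 1) = k" "Suc (k - 2) = k - 1" using k2 by auto
    have eq: "(\<Sum>i=k-1..K. f i) = f (k - 1) + (\<Sum>i=k..K. f i)" for f :: "nat \<Rightarrow> real"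
    proof -
      have "{k-1..K} = insert (k - 1) {k..K}" using k2 k by auto
      then show ?thesis using k2 by simp
    qed
    have d: "delta c K (\<lambda>i. real (A_count n h i) / real n) k =
      exp (- c * (\<Sum>i=k..K. real (A_count n h i) / real n)) - exp (- c * (\<Sum>i=k-1..K. real (A_count n h i) / real n))"
      using delta_alt[OF False, of c K] eq by simp
    show ?thesis using q d one[of "k - 1"] one[of "k - 2"] False s1 by (simp add: abs_if split: if_splits)
  qed
qed

lemma ode_increment:
  assumes c: "c > 0" and sol: "solves_tetris_ode c K \<alpha>" and k: "k \<in> {1..K}"
    and ab: "0 \<le> a" "a \<le> b" "b \<le> 1"
  shows "\<bar>\<alpha> b k - \<alpha> a k - (b - a) * delta c K (\<alpha> a) k\<bar> \<le> 2 * c * K * (b - a)\<^sup>2"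
proof -
  have hi: "((\<lambda>s. delta c K (\<alpha> s) k) has_integral \<alpha> t k) {0..t}" if "t \<in> {0..1}" for t
    using sol that k unfolding solves_tetris_ode_def by blast
  have ib: "(\<lambda>s. delta c K (\<alpha> s) k) integrable_on {0..b}" using hi[of b] ab by auto
  have iab: "(\<lambda>s. delta c K (\<alpha> s) k) integrable_on {a..b}"
    using ab by (intro integrable_subinterval_real[OF ib]) auto
  have "integral {0..a} (\<lambda>s. delta c K (\<alpha> s) k) + integral {a..b} (\<lambda>s. delta c K (\<alpha> s) k) =
        integral {0..b} (\<lambda>s. delta c K (\<alpha> s) k)"
    using ab ib by (intro Henstock_Kurzweil_Integration.integral_combine) auto
  moreover have "integral {0..a} (\<lambda>s. delta c K (\<alpha> s) k) = \<alpha> a k" using hi[of a] ab by (simp add: integral_unique)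
  moreover have "integral {0..b} (\<lambda>s. delta c K (\<alpha> s) k) = \<alpha> b k" using hi[of b] ab by (simp add: integral_unique)
  ultimately have diff: "\<alpha> b k - \<alpha> a k = integral {a..b} (\<lambda>s. delta c K (\<alpha> s) k)" by simp
  have "\<alpha> b k - \<alpha> a k - (b - a) * delta c K (\<alpha> a) k =
        integral {a..b} (\<lambda>s. delta c K (\<alpha> s) k - delta c K (\<alpha> a) k)"
  proof -
    have "integral {a..b} (\<lambda>s. delta c K (\<alpha> s) k - delta c K (\<alpha> a) k) =
       integral {a..b} (\<lambda>s. delta c K (\<alpha> s) k) - integral {a..b} (\<lambda>_. delta c K (\<alpha> a) k)"
      by (rule integral_diff[OF iab integrable_const_ivl])
    also have "integral {a..b} (\<lambda>_. delta c K (\<alpha> a) k) = (b - a) * delta c K (\<alpha> a) k"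
      using ab by simp
    finally show ?thesis using diff by simp
  qed
  also have "\<bar>\<dots>\<bar> \<le> integral {a..b} (\<lambda>_. 2 * c * K * (b - a))"
  proof (rule integral_norm_bound_integral[where 'a=real, unfolded real_norm_def])
    show "(\<lambda>s. delta c K (\<alpha> s) k - delta c K (\<alpha> a) k) integrable_on {a..b}"
      using iab by (intro integrable_diff) auto
    show "(\<lambda>_. 2 * c * K * (b - a)) integrable_on {a..b}" by (rule integrable_const_ivl)
    fix s assume s: "s \<in> {a..b}"
    then have s1: "s \<in> {0..1}" "a \<in> {0..1}" using ab by auto
    have "\<bar>delta c K (\<alpha> s) k - delta c K (\<alpha> a) k\<bar> \<le> 2 * c * dsum K (\<alpha> s) (\<alpha> a)"
      using solution_props(1)[OF c sol] s1 k by (intro delta_lip c) auto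
    also have "dsum K (\<alpha> s) (\<alpha> a) \<le> (\<Sum>i=1..K. b - a)"
      unfolding dsum_def
    proof (intro sum_mono)
      fix i assume i: "i \<in> {1..K}"
      have "dist (\<alpha> s i) (\<alpha> a i) \<le> 1 * dist s a"
        using lipschitz_onD[OF solution_props(2)[OF c sol i] s1] .
      then show "\<bar>\<alpha> s i - \<alpha> a i\<bar> \<le> b - a" using s by (simp add: dist_real_def)
    qed
    finally show "\<bar>delta c K (\<alpha> s) k - delta c K (\<alpha> a) k\<bar> \<le> 2 * c * K * (b - a)"
      using c by (simp add: mult.assoc)
  qed
  also have "\<dots> = 2 * c * K * (b - a)\<^sup>2" using ab by (simp add: power2_eq_square)
  finally show ?thesis .
qed

lemma disc_gronwall:
  fixes e :: "nat \<Rightarrow> real"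
  assumes b: "b \<ge> 0" and r: "r \<ge> 0" and e0: "\<And>t. e t \<ge> 0"
    and rec: "\<And>t. t \<le> N \<Longrightarrow> e t \<le> b + r * (\<Sum>s<t. e s)"
  shows "t \<le> N \<Longrightarrow> e t \<le> b * (1 + r) ^ t"
proof (induction t rule: less_induct)
  case (less t)
  have geo: "r * (\<Sum>s<t. (1 + r) ^ s) = (1 + r) ^ t - 1" for t
    by (induction t) (auto simp: algebra_simps)
  have "e t \<le> b + r * (\<Sum>s<t. e s)" using rec less.prems .
  also have "\<dots> \<le> b + r * (\<Sum>s<t. b * (1 + r) ^ s)"
    using less r by (intro add_left_mono mult_left_mono sum_mono) auto
  also have "\<dots> = b * (1 + r * (\<Sum>s<t. (1 + r) ^ s))" by (simp add: sum_distrib_left algebra_simps)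
  also have "\<dots> = b * (1 + r) ^ t" using geo[of t] by simp
  finally show ?case .
qed

lemma mart_lip:
  assumes K: "K \<ge> 1" and xs: "xs \<in> set_pmf (gtraj (expl_step n p K) expl_init N)" and tt: "t \<le> t'" "t' \<le> N"
  shows "\<bar>mart (expl_step n p K) (\<lambda>h. real (A_count n h k)) t' xs - mart (expl_step n p K) (\<lambda>h. real (A_count n h k)) t xs\<bar> \<le> t' - t"
  using tt
proof (induction t' rule: dec_induct)
  case base then show ?case by simp
next
  case (step m)
  let ?st = "expl_step n p K" and ?g = "\<lambda>h. real (A_count n h k)"
  have y: "xs ! Suc m \<in> set_pmf (?st (xs ! m))" using gtraj_support[OF xs] step by auto
  have inc: "0 \<le> ?g (xs ! Suc m) - ?g (xs ! m) \<and> ?g (xs ! Suc m) - ?g (xs ! m) \<le> 1"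
    using A_count_inc[OF K y] .
  have q01: "0 \<le> qexp ?st ?g (xs ! m) \<and> qexp ?st ?g (xs ! m) \<le> 1"
  proof -
    have fin: "finite (set_pmf (?st (xs ! m)))" by (rule finite_set_step[OF K])
    have "0 \<le> qexp ?st ?g (xs ! m)" unfolding qexp_def
      using A_count_inc[OF K] by (intro integral_nonneg_AE) (auto simp: AE_measure_pmf_iff)
    moreover have "qexp ?st ?g (xs ! m) \<le> measure_pmf.expectation (?st (xs ! m)) (\<lambda>_. 1::real)" unfolding qexp_def
      using A_count_inc[OF K] fin by (intro integral_mono_AE) (auto simp: AE_measure_pmf_iff integrable_measure_pmf_finite)
    ultimately show ?thesis by simp
  qed
  have "mart ?st ?g (Suc m) xs - mart ?st ?g m xs = ?g (xs ! Suc m) - ?g (xs ! m) - qexp ?st ?g (xs ! m)"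
    unfolding mart_def by simp
  then have "\<bar>mart ?st ?g (Suc m) xs - mart ?st ?g m xs\<bar> \<le> 1" using inc q01 by linarith
  then show ?case using step.IH step by linarith
qed

lemma sol_zero:
  assumes c: "c > 0" and sol: "solves_tetris_ode c K \<alpha>" and k: "k \<in> {1..K}"
  shows "\<alpha> 0 k = 0"
  using solution_props(1)[OF c sol, of 0 k] k by simp

lemma tri3:
  fixes Q D E Dl n :: real
  assumes n: "n > 0"
  shows "\<bar>Q / n - Dl\<bar> \<le> \<bar>Q - D\<bar> / n + \<bar>D - E\<bar> / n + \<bar>Dl - (1 / n) * E\<bar>"
proof -
  have eq: "Q / n - Dl = (Q - D) / n + (D - E) / n - (Dl - (1 / n) * E)"
    using n by (simp add: field_simps)
  have "\<bar>(Q - D) / n + (D - E) / n - (Dl - (1 / n) * E)\<bar> \<le> \<bar>(Q - D) / n\<bar> + \<bar>(D - E) / n\<bar> + \<bar>Dl - (1 / n) * E\<bar>"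
    by linarith
  then show ?thesis using n unfolding eq by (simp add: abs_div)
qed

lemma det_bound:
  fixes \<alpha> :: "real \<Rightarrow> nat \<Rightarrow> real"
  assumes c: "c > 0" and K: "K \<ge> 1" and sol: "solves_tetris_ode c K \<alpha>"
    and n: "real n \<ge> 2 * c" "n > 0"
    and xs: "xs \<in> set_pmf (gtraj (expl_step n (c / real n) K) expl_init n)"
    and z: "\<zeta> \<ge> 0"
    and hM: "\<And>t k. t \<le> n \<Longrightarrow> k \<in> {1..K} \<Longrightarrow>
       \<bar>mart (expl_step n (c / real n) K) (\<lambda>h. real (A_count n h k)) t xs\<bar> \<le> \<zeta> * real n"
    and t: "t \<le> n"
  shows "dsum K (\<lambda>i. real (A_count n (xs ! t) i) / real n) (\<alpha> (real t / real n))
         \<le> (K * \<zeta> + K * (4 * c\<^sup>2 + 2 * c * K) / real n) * (1 + 2 * c * K / real n) ^ t"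
proof -
  let ?st = "expl_step n (c / real n) K"
  define a where "a s = (\<lambda>i. real (A_count n (xs ! s) i) / real n)" for s
  define e where "e s = dsum K (a s) (\<alpha> (real s / real n))" for s
  define q where "q k s = qexp ?st (\<lambda>h. real (A_count n h k)) (xs ! s)" for k s
  define M where "M k t = mart ?st (\<lambda>h. real (A_count n h k)) t xs" for k t
  have nr: "real n > 0" using n by simp
  have x0: "xs ! 0 = expl_init" using gtraj_support[OF xs] by blast
  have e0: "e s \<ge> 0" for s unfolding e_def dsum_def by (intro sum_nonneg) auto
  have rec: "e t \<le> K * \<zeta> + K * (4 * c\<^sup>2 + 2 * c * K) / real n + 2 * c * K / real n * (\<Sum>s<t. e s)"
    if t: "t \<le> n" for t
  proof -
    have one: "\<bar>a t k - \<alpha> (real t / real n) k\<bar> \<le> \<zeta> + (\<Sum>s<t. (4 * c\<^sup>2 + 2 * c * K) / (real n)\<^sup>2 + 2 * c / real n * e s)"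
      if k: "k \<in> {1..K}" for k
    proof -
      have A: "real (A_count n (xs ! t) k) = (\<Sum>s<t. q k s) + M k t"
        unfolding M_def mart_def q_def using x0 by (simp add: A_count_def expl_init_def)
      have al: "\<alpha> (real t / real n) k = (\<Sum>s<t. \<alpha> (real (Suc s) / real n) k - \<alpha> (real s / real n) k)"
        using sum_lessThan_telescope[of "\<lambda>s. \<alpha> (real s / real n) k" t] sol_zero[OF c sol k] by simp
      have "a t k - \<alpha> (real t / real n) k = M k t / real n + (\<Sum>s<t. q k s / real n - (\<alpha> (real (Suc s) / real n) k - \<alpha> (real s / real n) k))"
        unfolding a_def A al using nr by (simp add: sum_subtractf sum_divide_distrib add_divide_distrib)
      also have "\<bar>\<dots>\<bar> \<le> \<bar>M k t / real n\<bar> + (\<Sum>s<t. \<bar>q k s / real n - (\<alpha> (real (Suc s) / real n) k - \<alpha> (real s / real n) k)\<bar>)"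
        by (rule order_trans[OF abs_triangle_ineq add_left_mono[OF sum_abs]])
      also have "\<dots> \<le> \<zeta> + (\<Sum>s<t. (4 * c\<^sup>2 + 2 * c * K) / (real n)\<^sup>2 + 2 * c / real n * e s)"
      proof (rule add_mono)
        show "\<bar>M k t / real n\<bar> \<le> \<zeta>" using hM[OF t k] nr by (simp add: M_def abs_div pos_divide_le_eq)
        show "(\<Sum>s<t. \<bar>q k s / real n - (\<alpha> (real (Suc s) / real n) k - \<alpha> (real s / real n) k)\<bar>)
             \<le> (\<Sum>s<t. (4 * c\<^sup>2 + 2 * c * K) / (real n)\<^sup>2 + 2 * c / real n * e s)"
        proof (rule sum_mono)
          fix s assume "s \<in> {..<t}"
          then have s: "s < n" "s \<le> n" "Suc s \<le> n" using t by auto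
          have inv: "goodK n K (xs ! s)" using traj_inv[OF K xs s(2)] by blast
          have U: "unexplored n (xs ! s) \<noteq> {}" using traj_unexpl[OF K xs s(2,1)] .
          have t1: "\<bar>q k s - delta c K (a s) k\<bar> \<le> 4 * c\<^sup>2 / real n"
            unfolding q_def a_def using q_bound[OF c K inv U n(1) k] .
          have sn: "real s / real n \<in> {0..1}" using s nr by auto
          have t2: "\<bar>delta c K (a s) k - delta c K (\<alpha> (real s / real n)) k\<bar> \<le> 2 * c * e s"
            unfolding e_def
            by (rule delta_lip[OF c _ _ k]) (use solution_props(1)[OF c sol sn] in \<open>auto simp: a_def\<close>)
          have t3: "\<bar>\<alpha> (real (Suc s) / real n) k - \<alpha> (real s / real n) k - (real (Suc s) / real n - real s / real n) * delta c K (\<alpha> (real s / real n)) k\<bar>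
                \<le> 2 * c * K * (real (Suc s) / real n - real s / real n)\<^sup>2"
            by (rule ode_increment[OF c sol k]) (use s nr in \<open>auto simp: divide_right_mono\<close>)
          have dd: "real (Suc s) / real n - real s / real n = 1 / real n" using nr by (simp add: field_simps)
          have "\<bar>q k s / real n - (\<alpha> (real (Suc s) / real n) k - \<alpha> (real s / real n) k)\<bar>
              \<le> \<bar>q k s - delta c K (a s) k\<bar> / real n + \<bar>delta c K (a s) k - delta c K (\<alpha> (real s / real n)) k\<bar> / real n
                + \<bar>\<alpha> (real (Suc s) / real n) k - \<alpha> (real s / real n) k - (1 / real n) * delta c K (\<alpha> (real s / real n)) k\<bar>"
            by (rule tri3[OF nr])
          also have "\<dots> \<le> 4 * c\<^sup>2 / real n / real n + 2 * c * e s / real n + 2 * c * K * (1 / real n)\<^sup>2"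
            using t1 t2 t3 nr unfolding dd by (intro add_mono divide_right_mono) auto
          also have "\<dots> = (4 * c\<^sup>2 + 2 * c * K) / (real n)\<^sup>2 + 2 * c / real n * e s"
            using nr by (simp add: field_simps power2_eq_square)
          finally show "\<bar>q k s / real n - (\<alpha> (real (Suc s) / real n) k - \<alpha> (real s / real n) k)\<bar>
             \<le> (4 * c\<^sup>2 + 2 * c * K) / (real n)\<^sup>2 + 2 * c / real n * e s" .
        qed
      qed
      finally show ?thesis .
    qed
    have "e t \<le> (\<Sum>k=1..K. \<zeta> + (\<Sum>s<t. (4 * c\<^sup>2 + 2 * c * K) / (real n)\<^sup>2 + 2 * c / real n * e s))"
    proof -
      have "e t = (\<Sum>k=1..K. \<bar>a t k - \<alpha> (real t / real n) k\<bar>)" by (simp add: e_def dsum_def)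
      also have "\<dots> \<le> (\<Sum>k=1..K. \<zeta> + (\<Sum>s<t. (4 * c\<^sup>2 + 2 * c * K) / (real n)\<^sup>2 + 2 * c / real n * e s))"
        using one by (intro sum_mono) blast
      finally show ?thesis .
    qed
    also have "\<dots> = K * \<zeta> + K * (real t * (4 * c\<^sup>2 + 2 * c * K) / (real n)\<^sup>2) + 2 * c * K / real n * (\<Sum>s<t. e s)"
      by (simp add: sum.distrib sum_distrib_left algebra_simps sum_divide_distrib)
    also have "real t * (4 * c\<^sup>2 + 2 * c * K) / (real n)\<^sup>2 \<le> real n * (4 * c\<^sup>2 + 2 * c * K) / (real n)\<^sup>2"
      using t c by (intro divide_right_mono mult_right_mono) auto
    also have "real n * (4 * c\<^sup>2 + 2 * c * K) / (real n)\<^sup>2 = (4 * c\<^sup>2 + 2 * c * K) / real n"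
      using nr by (simp add: power2_eq_square)
    finally show ?thesis by (simp add: mult_left_mono)
  qed
  have "e t \<le> (K * \<zeta> + K * (4 * c\<^sup>2 + 2 * c * K) / real n) * (1 + 2 * c * K / real n) ^ t"
    by (rule disc_gronwall[where N = n, OF _ _ e0 rec t]) (use z c nr in auto)
  then show ?thesis by (simp add: e_def a_def)
qed

lemma real_time_bound:
  fixes \<alpha> :: "real \<Rightarrow> nat \<Rightarrow> real"
  assumes c: "c > 0" and K: "K \<ge> 1" and sol: "solves_tetris_ode c K \<alpha>"
    and n: "real n \<ge> 2 * c" "n > 0"
    and xs: "xs \<in> set_pmf (gtraj (expl_step n (c / real n) K) expl_init n)"
    and z: "\<zeta> \<ge> 0"
    and hM: "\<And>t k. t \<le> n \<Longrightarrow> k \<in> {1..K} \<Longrightarrow>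
       \<bar>mart (expl_step n (c / real n) K) (\<lambda>h. real (A_count n h k)) t xs\<bar> \<le> \<zeta> * real n"
    and t: "t \<in> {0..1}" and k: "k \<in> {1..K}"
  shows "\<bar>alpha_n n xs t k - \<alpha> t k\<bar> \<le> (K * \<zeta> + K * (4 * c\<^sup>2 + 2 * c * K) / real n) * exp (2 * c * K) + 1 / real n"
proof -
  have nr: "real n > 0" using n by simp
  define s where "s = nat \<lfloor>real n * t\<rfloor>"
  have fl: "real s \<le> real n * t" "real n * t < real s + 1"
    using t nr unfolding s_def by (auto simp: of_nat_nat)
  have sn: "s \<le> n"
  proof -
    have "real s \<le> real n" using fl(1) t nr by (smt (verit) atLeastAtMost_iff mult_left_le)
    then show ?thesis by simp
  qed
  have sn1: "real s / real n \<in> {0..1}" using sn nr by auto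
  have dist: "\<bar>real s / real n - t\<bar> \<le> 1 / real n"
  proof -
    have "real s / real n \<le> t" using fl(1) nr by (simp add: divide_le_eq mult.commute)
    moreover have "t < (real s + 1) / real n" using fl(2) nr by (simp add: less_divide_eq mult.commute)
    ultimately show ?thesis using nr by (simp add: add_divide_distrib abs_if)
  qed
  have an: "alpha_n n xs t k = real (A_count n (xs ! s) k) / real n"
    by (simp add: alpha_n_def s_def)
  define B where "B = (K * \<zeta> + K * (4 * c\<^sup>2 + 2 * c * K) / real n)"
  have B0: "B \<ge> 0" unfolding B_def using z c nr by auto
  have db: "dsum K (\<lambda>i. real (A_count n (xs ! s) i) / real n) (\<alpha> (real s / real n)) \<le> B * (1 + 2 * c * K / real n) ^ s"
    unfolding B_def by (rule det_bound[OF c K sol n xs z hM sn])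
  have pw: "(1 + 2 * c * K / real n) ^ s \<le> exp (2 * c * K)"
  proof -
    have "(1 + 2 * c * K / real n) ^ s \<le> (exp (2 * c * K / real n)) ^ s"
      using c nr by (intro power_mono) (auto simp: exp_ge_add_one_self)
    also have "\<dots> = exp (real s * (2 * c * K / real n))" by (rule exp_of_nat_mult[symmetric])
    also have "\<dots> \<le> exp (2 * c * K)"
    proof -
      have "real s * (2 * c * K / real n) \<le> real n * (2 * c * K / real n)"
        using sn c nr by (intro mult_right_mono) auto
      then show ?thesis using nr by simp
    qed
    finally show ?thesis .
  qed
  have "\<bar>alpha_n n xs t k - \<alpha> t k\<bar> \<le> \<bar>real (A_count n (xs ! s) k) / real n - \<alpha> (real s / real n) k\<bar> + \<bar>\<alpha> (real s / real n) k - \<alpha> t k\<bar>"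
    unfolding an by linarith
  also have "\<bar>real (A_count n (xs ! s) k) / real n - \<alpha> (real s / real n) k\<bar> \<le> dsum K (\<lambda>i. real (A_count n (xs ! s) i) / real n) (\<alpha> (real s / real n))"
    unfolding dsum_def using k by (intro member_le_sum[where f = "\<lambda>i. \<bar>real (A_count n (xs ! s) i) / real n - \<alpha> (real s / real n) i\<bar>"]) auto
  also have "\<bar>\<alpha> (real s / real n) k - \<alpha> t k\<bar> \<le> 1 / real n"
  proof -
    have "dist (\<alpha> (real s / real n) k) (\<alpha> t k) \<le> 1 * dist (real s / real n) t"
      using lipschitz_onD[OF solution_props(2)[OF c sol k] sn1 t] .
    then show ?thesis using dist by (simp add: dist_real_def)
  qed
  also have "dsum K (\<lambda>i. real (A_count n (xs ! s) i) / real n) (\<alpha> (real s / real n)) \<le> B * exp (2 * c * K)"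
    using db mult_left_mono[OF pw B0] by linarith
  finally show ?thesis by (simp add: B_def)
qed

lemma grid_prob:
  assumes c: "c > 0" and K: "K \<ge> 1" and z: "\<zeta> > 0" and G: "real G \<ge> 4 / \<zeta>" "G > 0"
    and n: "real n \<ge> 4 / \<zeta>" "n > 0"
  shows "measure_pmf.prob (gtraj (expl_step n (c / real n) K) expl_init n)
           {xs. \<exists>t\<le>n. \<exists>k\<in>{1..K}. \<bar>mart (expl_step n (c / real n) K) (\<lambda>h. real (A_count n h k)) t xs\<bar> > \<zeta> * real n}
         \<le> 4 * (real G + 1) * K / (\<zeta>\<^sup>2 * real n)"
proof -
  let ?st = "expl_step n (c / real n) K"
  let ?P = "gtraj ?st expl_init n"
  define M where "M k t xs = mart ?st (\<lambda>h. real (A_count n h k)) t xs" for k t xs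
  define tau where "tau j = j * n div G" for j
  define E where "E jk = {xs. \<zeta> * real n / 2 \<le> \<bar>M (snd jk) (tau (fst jk)) xs\<bar>}" for jk
  have nr: "real n > 0" using n by simp
  have Gr: "real G > 0" using G by simp
  have tau_le: "tau j \<le> n" if "j \<le> G" for j
  proof -
    have "j * n \<le> G * n" using that by simp
    then show ?thesis unfolding tau_def using G by (metis div_le_mono nonzero_mult_div_cancel_left not_gr0 mult.commute)
  qed
  have sub: "AE xs in ?P. xs \<in> {xs. \<exists>t\<le>n. \<exists>k\<in>{1..K}. \<bar>M k t xs\<bar> > \<zeta> * real n} \<longrightarrow> xs \<in> (\<Union>jk\<in>{..G} \<times> {1..K}. E jk)"
  proof (unfold AE_measure_pmf_iff, intro ballI impI)
    fix xs assume xs: "xs \<in> set_pmf ?P" and "xs \<in> {xs. \<exists>t\<le>n. \<exists>k\<in>{1..K}. \<bar>M k t xs\<bar> > \<zeta> * real n}"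
    then obtain t k where t: "t \<le> n" and k: "k \<in> {1..K}" and big: "\<bar>M k t xs\<bar> > \<zeta> * real n" by auto
    define j where "j = t * G div n"
    have jG: "j \<le> G"
    proof -
      have "t * G \<le> n * G" using t by simp
      then show ?thesis unfolding j_def using n by (metis div_le_mono nonzero_mult_div_cancel_left not_gr0)
    qed
    have jn: "j * n \<le> t * G" unfolding j_def by (rule div_times_less_eq_dividend)
    have tj: "tau j \<le> t"
    proof -
      have "tau j \<le> t * G div G" unfolding tau_def using jn by (rule div_le_mono)
      then show ?thesis using G by simp
    qed
    have a1: "t * G < (j + 1) * n" unfolding j_def using dividend_less_div_times[of n "t * G"] n
      by (simp add: algebra_simps)
    have a2: "j * n < G * tau j + G" unfolding tau_def using dividend_less_times_div[of G "j * n"] G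
      by (simp add: algebra_simps)
    have "real G * (real t - real (tau j)) < real G + real n"
    proof -
      have "t * G < G * tau j + G + n" using a1 a2 by (simp add: algebra_simps)
      then have "real t * real G < real G * real (tau j) + real G + real n" by (metis of_nat_add of_nat_less_iff of_nat_mult)
      then show ?thesis by (simp add: algebra_simps)
    qed
    then have diff: "real t - real (tau j) < 1 + real n / real G"
      using Gr by (simp add: field_simps)
    have nG: "real n / real G \<le> \<zeta> * real n / 4"
    proof -
      have "4 / \<zeta> \<le> real G" by (rule G(1))
      then have "4 \<le> \<zeta> * real G" using z by (simp add: field_simps)
      then have "4 * real n \<le> \<zeta> * real G * real n" using nr by simp
      then show ?thesis using Gr by (simp add: field_simps)
    qed
    have one: "1 \<le> \<zeta> * real n / 4"
    proof -
      have "4 / \<zeta> \<le> real n" by (rule n(1))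
      then show ?thesis using z by (simp add: field_simps)
    qed
    have lip: "\<bar>M k t xs - M k (tau j) xs\<bar> \<le> real t - real (tau j)"
      unfolding M_def using mart_lip[OF K xs tj t] tj by simp
    have "\<zeta> * real n / 2 \<le> \<bar>M k (tau j) xs\<bar>" using lip big diff nG one by linarith
    then show "xs \<in> (\<Union>jk\<in>{..G} \<times> {1..K}. E jk)" using jG k unfolding E_def by force
  qed
  have "measure_pmf.prob ?P {xs. \<exists>t\<le>n. \<exists>k\<in>{1..K}. \<bar>M k t xs\<bar> > \<zeta> * real n}
        \<le> measure_pmf.prob ?P (\<Union>jk\<in>{..G} \<times> {1..K}. E jk)"
    using sub by (intro measure_pmf.finite_measure_mono_AE) auto
  also have "\<dots> \<le> (\<Sum>jk\<in>{..G} \<times> {1..K}. measure_pmf.prob ?P (E jk))"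
    by (intro measure_pmf.finite_measure_subadditive_finite) auto
  also have "\<dots> \<le> (\<Sum>jk\<in>{..G} \<times> {1..K}. real n / (\<zeta> * real n / 2)\<^sup>2)"
  proof (intro sum_mono)
    fix jk assume jk: "jk \<in> {..G} \<times> {1..K}"
    have "measure_pmf.prob ?P (E jk) \<le> real (tau (fst jk)) / (\<zeta> * real n / 2)\<^sup>2"
      unfolding E_def M_def
      by (rule mart_chebyshev[OF finite_set_step[OF K] A_count_inc[OF K]]) (use z nr tau_le jk in auto)
    also have "\<dots> \<le> real n / (\<zeta> * real n / 2)\<^sup>2"
      using tau_le jk by (intro divide_right_mono) auto
    finally show "measure_pmf.prob ?P (E jk) \<le> real n / (\<zeta> * real n / 2)\<^sup>2" .
  qed
  also have "\<dots> = (real G + 1) * K * (real n / (\<zeta> * real n / 2)\<^sup>2)"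
    by (simp add: card_cartesian_product algebra_simps)
  also have "\<dots> = 4 * (real G + 1) * K / (\<zeta>\<^sup>2 * real n)"
    using nr z by (simp add: field_simps power2_eq_square)
  finally show ?thesis unfolding M_def .
qed

lemma re: "(n::real) > 0 \<Longrightarrow> (A + B / n) * E + 1 / n = A * E + (B * E + 1) / n"
  by (simp add: field_simps)

lemma expl_conv:
  fixes \<alpha> :: "real \<Rightarrow> nat \<Rightarrow> real"
  assumes c: "c > 0" and K: "K \<ge> 1" and sol: "solves_tetris_ode c K \<alpha>" and eps: "\<epsilon> > 0"
  shows "(\<lambda>n. measure_pmf.prob (expl_traj n (c / real n) K n)
                 {xs. \<exists>t\<in>{0..1}. \<exists>k\<in>{1..K}. \<bar>alpha_n n xs t k - \<alpha> t k\<bar> > \<epsilon>}) \<longlonglongrightarrow> 0"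
proof -
  define L where "L = 2 * c * K"
  define C where "C = K * (4 * c\<^sup>2 + 2 * c * K)"
  define \<zeta> where "\<zeta> = \<epsilon> / (2 * K * exp L)"
  define G where "G = nat \<lceil>4 / \<zeta>\<rceil>"
  have Kr: "real K > 0" using K by simp
  have z: "\<zeta> > 0" unfolding \<zeta>_def using eps Kr by simp
  have C0: "C \<ge> 0" unfolding C_def using c by simp
  have G1: "real G \<ge> 4 / \<zeta>" unfolding G_def by linarith
  have "4 / \<zeta> > 0" using z by simp
  then have "real G > 0" using G1 by linarith
  then have G0: "G > 0" by simp
  have Kz: "real K * \<zeta> * exp L = \<epsilon> / 2" unfolding \<zeta>_def using Kr by simp
  define N0 where "N0 = nat \<lceil>2 * c + 4 / \<zeta> + 2 * (C * exp L + 1) / \<epsilon>\<rceil> + 1"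
  define b where "b n = 4 * (real G + 1) * K / (\<zeta>\<^sup>2 * real n)" for n :: nat
  have bound: "measure_pmf.prob (expl_traj n (c / real n) K n)
                 {xs. \<exists>t\<in>{0..1}. \<exists>k\<in>{1..K}. \<bar>alpha_n n xs t k - \<alpha> t k\<bar> > \<epsilon>} \<le> b n"
    if nN: "n \<ge> N0" for n
  proof -
    have t1: "2 * c \<ge> 0" "4 / \<zeta> \<ge> 0" "2 * (C * exp L + 1) / \<epsilon> \<ge> 0" using c z C0 eps by auto
    have nbig: "real n \<ge> 2 * c + 4 / \<zeta> + 2 * (C * exp L + 1) / \<epsilon>"
    proof -
      have "real N0 \<ge> 2 * c + 4 / \<zeta> + 2 * (C * exp L + 1) / \<epsilon>" unfolding N0_def by linarith
      then show ?thesis using nN by linarith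
    qed
    have n0: "n > 0" using nN unfolding N0_def by simp
    have nr: "real n > 0" using n0 by simp
    have n2c: "real n \<ge> 2 * c" using nbig t1 by linarith
    have n4: "real n \<ge> 4 / \<zeta>" using nbig t1 by linarith
    have nC: "(C * exp L + 1) / real n \<le> \<epsilon> / 2"
    proof -
      have "2 * (C * exp L + 1) / \<epsilon> \<le> real n" using nbig t1 by linarith
      then have "2 * (C * exp L + 1) \<le> real n * \<epsilon>" using eps by (simp add: divide_le_eq)
      then show ?thesis using nr by (simp add: divide_le_eq mult.commute)
    qed
    let ?st = "expl_step n (c / real n) K"
    let ?P = "gtraj ?st expl_init n"
    let ?B = "{xs. \<exists>t\<le>n. \<exists>k\<in>{1..K}. \<bar>mart ?st (\<lambda>h. real (A_count n h k)) t xs\<bar> > \<zeta> * real n}"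
    have ae: "AE xs in ?P. xs \<in> {xs. \<exists>t\<in>{0..1}. \<exists>k\<in>{1..K}. \<bar>alpha_n n xs t k - \<alpha> t k\<bar> > \<epsilon>} \<longrightarrow> xs \<in> ?B"
    proof (unfold AE_measure_pmf_iff, intro ballI impI, rule ccontr)
      fix xs assume xs: "xs \<in> set_pmf ?P"
        and bad: "xs \<in> {xs. \<exists>t\<in>{0..1}. \<exists>k\<in>{1..K}. \<bar>alpha_n n xs t k - \<alpha> t k\<bar> > \<epsilon>}"
        and nB: "xs \<notin> ?B"
      from bad obtain t k where t: "t \<in> {0..1}" and k: "k \<in> {1..K}" and gt: "\<bar>alpha_n n xs t k - \<alpha> t k\<bar> > \<epsilon>"
        by auto
      have hM: "\<And>t k. t \<le> n \<Longrightarrow> k \<in> {1..K} \<Longrightarrow>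
         \<bar>mart ?st (\<lambda>h. real (A_count n h k)) t xs\<bar> \<le> \<zeta> * real n"
      proof -
        fix t k assume "t \<le> n" "k \<in> {1..K}"
        then have "\<not> \<bar>mart ?st (\<lambda>h. real (A_count n h k)) t xs\<bar> > \<zeta> * real n" using nB by blast
        then show "\<bar>mart ?st (\<lambda>h. real (A_count n h k)) t xs\<bar> \<le> \<zeta> * real n" by (simp add: not_less)
      qed
      have "\<bar>alpha_n n xs t k - \<alpha> t k\<bar> \<le> (K * \<zeta> + K * (4 * c\<^sup>2 + 2 * c * K) / real n) * exp (2 * c * K) + 1 / real n"
        by (rule real_time_bound[OF c K sol n2c n0 xs less_imp_le[OF z] hM t k])
      also have "\<dots> = real K * \<zeta> * exp L + (C * exp L + 1) / real n"
        unfolding C_def L_def using re[OF nr] by simp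
      also have "\<dots> \<le> \<epsilon>" using Kz nC by linarith
      finally show False using gt by simp
    qed
    have "measure_pmf.prob (expl_traj n (c / real n) K n)
                 {xs. \<exists>t\<in>{0..1}. \<exists>k\<in>{1..K}. \<bar>alpha_n n xs t k - \<alpha> t k\<bar> > \<epsilon>} \<le> measure_pmf.prob ?P ?B"
      unfolding expl_traj_gtraj using ae by (intro measure_pmf.finite_measure_mono_AE) auto
    also have "\<dots> \<le> b n" unfolding b_def
      by (rule grid_prob[OF c K z G1 G0 n4 n0])
    finally show ?thesis .
  qed
  have lim: "b \<longlonglongrightarrow> 0"
  proof -
    have "(\<lambda>n. (4 * (real G + 1) * K / \<zeta>\<^sup>2) / real n) \<longlonglongrightarrow> 0" by (rule lim_const_over_n)
    then show ?thesis unfolding b_def by (simp add: field_simps)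
  qed
  show ?thesis
  proof (rule tendsto_sandwich[OF _ _ tendsto_const lim])
    show "\<forall>\<^sub>F n in sequentially. 0 \<le> measure_pmf.prob (expl_traj n (c / real n) K n)
                 {xs. \<exists>t\<in>{0..1}. \<exists>k\<in>{1..K}. \<bar>alpha_n n xs t k - \<alpha> t k\<bar> > \<epsilon>}" by simp
    show "\<forall>\<^sub>F n in sequentially. measure_pmf.prob (expl_traj n (c / real n) K n)
                 {xs. \<exists>t\<in>{0..1}. \<exists>k\<in>{1..K}. \<bar>alpha_n n xs t k - \<alpha> t k\<bar> > \<epsilon>} \<le> b n"
      using bound by (intro eventually_sequentiallyI) auto
  qed
qed

fun iter :: "('s \<Rightarrow> 's pmf) \<Rightarrow> nat \<Rightarrow> 's \<Rightarrow> 's pmf" where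
  "iter st 0 x = return_pmf x"
| "iter st (Suc m) x = st x \<bind> iter st m"

lemma iter_Suc': "iter st (Suc m) x = iter st m x \<bind> st"
proof (induction m arbitrary: x)
  case 0
  have "iter st 0 = return_pmf" by (rule ext) simp
  then show ?case by (simp add: bind_return_pmf bind_return_pmf')
next
  case (Suc m)
  have eq: "iter st (Suc m) = (\<lambda>y. iter st m y \<bind> st)" by (rule ext) (rule Suc.IH)
  have "iter st (Suc (Suc m)) x = st x \<bind> (\<lambda>y. iter st m y \<bind> st)"
    by (simp only: iter.simps(2) eq)
  also have "\<dots> = iter st (Suc m) x \<bind> st" by (simp add: bind_assoc_pmf)
  finally show ?case .
qed

lemma map_last_gtraj: "map_pmf last (gtraj st x0 t) = iter st t x0"
proof (induction t)
  case 0 then show ?case by simp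
next
  case (Suc t)
  have "map_pmf last (gtraj st x0 (Suc t)) = gtraj st x0 t \<bind> (\<lambda>xs. st (last xs))"
    by (simp add: map_bind_pmf bind_return_pmf' map_pmf_def[symmetric] pmf.map_comp o_def)
  also have "\<dots> = map_pmf last (gtraj st x0 t) \<bind> st" by (simp add: bind_map_pmf)
  also have "\<dots> = iter st (Suc t) x0" using Suc by (simp only: iter_Suc')
  finally show ?case .
qed

definition conv :: "expl_state \<Rightarrow> nat \<Rightarrow> nat" where
  "conv h v = (case h v of None \<Rightarrow> 0 | Some j \<Rightarrow> j)"

definition TT :: "nat \<Rightarrow> nat set \<Rightarrow> (nat \<times> nat) set" where
  "TT n R = {(i, j). i < j \<and> j < n \<and> (i \<in> R \<or> j \<in> R)}"

definition phi :: "nat \<Rightarrow> nat \<Rightarrow> nat \<times> nat" where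
  "phi x w = (min x w, max x w)"

definition Tx :: "nat \<Rightarrow> nat set \<Rightarrow> nat \<Rightarrow> (nat \<times> nat) set" where
  "Tx n R x = phi x ` ({..<n} - R)"

lemma finite_TT[simp]: "finite (TT n R)"
proof -
  have "TT n R \<subseteq> {..<n} \<times> {..<n}" unfolding TT_def by auto
  then show ?thesis by (rule finite_subset) simp
qed

lemma finite_Tx[simp]: "finite (Tx n R x)"
  unfolding Tx_def by simp

lemma TT_split:
  assumes "x \<in> R" "R \<subseteq> {..<n}"
  shows "TT n R = Tx n R x \<union> TT n (R - {x})" and "Tx n R x \<inter> TT n (R - {x}) = {}"
proof -
  show "TT n R = Tx n R x \<union> TT n (R - {x})"
  proof
    show "TT n R \<subseteq> Tx n R x \<union> TT n (R - {x})"
    proof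
      fix pr assume "pr \<in> TT n R"
      then obtain i j where pr: "pr = (i, j)" "i < j" "j < n" "i \<in> R \<or> j \<in> R" unfolding TT_def by auto
      show "pr \<in> Tx n R x \<union> TT n (R - {x})"
      proof (cases "i \<in> R - {x} \<or> j \<in> R - {x}")
        case True then show ?thesis using pr unfolding TT_def by auto
      next
        case False
        then have "(i = x \<and> j \<notin> R) \<or> (j = x \<and> i \<notin> R)" using pr by auto
        then show ?thesis
        proof
          assume a: "i = x \<and> j \<notin> R"
          then have "pr = phi x j" using pr by (simp add: phi_def)
          then show ?thesis using a pr unfolding Tx_def by auto
        next
          assume a: "j = x \<and> i \<notin> R"
          then have "pr = phi x i" using pr by (simp add: phi_def)
          then show ?thesis using a pr unfolding Tx_def by auto
        qed
      qed
    qed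
    show "Tx n R x \<union> TT n (R - {x}) \<subseteq> TT n R"
    proof
      fix pr assume "pr \<in> Tx n R x \<union> TT n (R - {x})"
      then show "pr \<in> TT n R"
      proof
        assume "pr \<in> Tx n R x"
        then obtain w where w: "w < n" "w \<notin> R" "pr = phi x w" unfolding Tx_def by auto
        then have "x \<noteq> w" using assms by auto
        then show ?thesis using w assms unfolding TT_def phi_def by (auto simp: min_def max_def)
      next
        assume "pr \<in> TT n (R - {x})" then show ?thesis unfolding TT_def by auto
      qed
    qed
  qed
  show "Tx n R x \<inter> TT n (R - {x}) = {}"
    using assms unfolding Tx_def TT_def phi_def by (auto simp: min_def max_def split: if_splits)
qed

lemma phi_Tx_other:
  assumes "u \<in> R" "u \<noteq> x" "x \<in> R"
  shows "phi u w \<notin> Tx n R x"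
proof
  assume "phi u w \<in> Tx n R x"
  then obtain w' where w': "w' \<notin> R" "phi u w = phi x w'" unfolding Tx_def by auto
  then have "{u, w} = {x, w'}" unfolding phi_def by (auto simp: min_def max_def split: if_splits)
  then show False using assms w' by (metis doubleton_eq_iff)
qed

lemma tetris_update_cong:
  assumes "\<And>w. E (phi u w) = E' (phi u w)"
  shows "tetris_update n K E s u = tetris_update n K E' s u"
  using assms unfolding tetris_update_def adj_def phi_def by simp

lemma foldl_tetris_cong:
  assumes "\<And>u w. u \<in> set xs \<Longrightarrow> E (phi u w) = E' (phi u w)"
  shows "foldl (tetris_update n K E) s xs = foldl (tetris_update n K E') s xs"
  using assms
proof (induction xs arbitrary: s)
  case Nil then show ?case by simp
next
  case (Cons u xs)
  have "tetris_update n K E s u = tetris_update n K E' s u"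
    by (rule tetris_update_cong) (use Cons.prems in auto)
  then show ?case using Cons by simp
qed

lemma tetris_update_conv:
  assumes K: "K \<ge> 1" and x: "x \<in> unexplored n h"
  shows "tetris_update n K E (conv h) x = conv (h(x := Some (cls K (jmax n h (\<lambda>w. E (phi x w))))))"
proof -
  have xn: "x < n" "h x = None" using x by (auto simp: unexplored_def)
  have seteq: "insert 0 {conv h w | w. w < n \<and> adj E x w} =
               insert 0 {k. \<exists>w\<in>explored n h. E (phi x w) \<and> h w = Some k}"
  proof (intro equalityI subsetI)
    fix k assume "k \<in> insert 0 {conv h w | w. w < n \<and> adj E x w}"
    then consider "k = 0" | w where "w < n" "adj E x w" "k = conv h w" by auto
    then show "k \<in> insert 0 {k. \<exists>w\<in>explored n h. E (phi x w) \<and> h w = Some k}"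
    proof cases
      case 1 then show ?thesis by simp
    next
      case 2
      show ?thesis
      proof (cases "h w")
        case None then show ?thesis using 2 by (simp add: conv_def)
      next
        case (Some j)
        then show ?thesis using 2 by (auto simp: conv_def explored_def adj_def phi_def)
      qed
    qed
  next
    fix k assume "k \<in> insert 0 {k. \<exists>w\<in>explored n h. E (phi x w) \<and> h w = Some k}"
    then consider "k = 0" | w where "w \<in> explored n h" "E (phi x w)" "h w = Some k" by auto
    then show "k \<in> insert 0 {conv h w | w. w < n \<and> adj E x w}"
    proof cases
      case 1 then show ?thesis by simp
    next
      case 2
      then have "w \<noteq> x" using xn by auto
      then have "w < n \<and> adj E x w" using 2 by (auto simp: explored_def adj_def phi_def)
      moreover have "conv h w = k" using 2 by (simp add: conv_def)
      ultimately show ?thesis by blast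
    qed
  qed
  have "(if Max (insert 0 {conv h w | w. w < n \<and> adj E x w}) < K
          then Max (insert 0 {conv h w | w. w < n \<and> adj E x w}) + 1 else 0)
        = cls K (jmax n h (\<lambda>w. E (phi x w)))"
    unfolding seteq jmax_def cls_def using K by auto
  then show ?thesis
    unfolding tetris_update_def Let_def by (auto simp: conv_def fun_eq_iff)
qed

lemma phi_inj: "phi x w = phi x w' \<Longrightarrow> w = w'"
proof -
  assume a: "phi x w = phi x w'"
  have s: "min x v + max x v = x + v" for v :: nat by (simp add: min_def max_def)
  from a have "min x w + max x w = min x w' + max x w'" unfolding phi_def by simp
  then show "w = w'" using s[of w] s[of w'] by simp
qed

lemma phi_bij:
  assumes x: "x \<in> R" "R \<subseteq> {..<n}" and U: "unexplored n h = R"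
  shows "bij_betw (phi x) (explored n h) (Tx n R x)" and "\<And>w. w \<notin> explored n h \<Longrightarrow> phi x w \<notin> Tx n R x"
proof -
  have E0: "explored n h = {..<n} - unexplored n h" unfolding explored_def unexplored_def by auto
  have E: "explored n h = {..<n} - R" using E0 U by simp
  have inj: "inj_on (phi x) A" for A unfolding inj_on_def using phi_inj by blast
  show "bij_betw (phi x) (explored n h) (Tx n R x)" unfolding bij_betw_def Tx_def E using inj by simp
  fix w assume w0: "w \<notin> explored n h"
  show "phi x w \<notin> Tx n R x"
  proof
    assume "phi x w \<in> Tx n R x"
    then obtain w' where w': "w' \<in> {..<n} - R" "phi x w = phi x w'" unfolding Tx_def by blast
    from phi_inj[OF w'(2)] have "w = w'" .
    then show False using w0 w'(1) E by simp
  qed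
qed

lemma Xd_Tx:
  assumes x: "x \<in> R" "R \<subseteq> {..<n}" and U: "unexplored n h = R"
  shows "Xd n p K h = map_pmf (\<lambda>E1. cls K (jmax n h (\<lambda>w. E1 (phi x w)))) (Pi_pmf (Tx n R x) False (\<lambda>_. bernoulli_pmf p))"
proof -
  have "Jpmf n p h = map_pmf (\<lambda>g. g \<circ> phi x) (Pi_pmf (Tx n R x) False (\<lambda>_. bernoulli_pmf p))"
    unfolding Jpmf_def by (rule Pi_pmf_bij_betw[OF _ phi_bij(1)[OF x U] phi_bij(2)[OF x U]]) simp
  then show ?thesis unfolding Xd_def by (simp add: pmf.map_comp o_def)
qed

lemma jmax_cong: "(\<And>w. w \<in> explored n h \<Longrightarrow> J w = J' w) \<Longrightarrow> jmax n h J = jmax n h J'"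
  unfolding jmax_def by (metis (no_types, lifting))

lemma unexpl_upd: "unexplored n (h(x := Some y)) = unexplored n h - {x}"
  unfolding unexplored_def by auto

lemma tetris_equiv:
  assumes K: "K \<ge> 1"
  shows "card R = m \<Longrightarrow> R \<subseteq> {..<n} \<Longrightarrow> unexplored n h = R \<Longrightarrow>
    do { E \<leftarrow> Pi_pmf (TT n R) False (\<lambda>_. bernoulli_pmf p);
         ord \<leftarrow> pmf_of_set (permutations_of_set R);
         return_pmf (foldl (tetris_update n K E) (conv h) ord) }
    = map_pmf conv (iter (expl_step n p K) m h)"
proof (induction m arbitrary: R h)
  case 0
  have fin: "finite R" using 0 finite_subset by auto
  then have R: "R = {}" using 0 by simp
  have "TT n {} = {}" unfolding TT_def by simp
  then show ?case using R by (simp add: bind_return_pmf map_pmf_def pmf_of_set_singleton)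
next
  case (Suc m)
  have finR: "finite R" using Suc.prems(2) by (rule finite_subset) simp
  have Rne: "R \<noteq> {}" using Suc.prems(1) by auto
  let ?B = "\<lambda>_::nat \<times> nat. bernoulli_pmf p"
  let ?f = "\<lambda>E. tetris_update n K E"
  define hx where "hx x E1 = h(x := Some (cls K (jmax n h (\<lambda>w. E1 (phi x w)))))" for x E1
  have star: "do { E \<leftarrow> Pi_pmf (TT n R) False ?B; xs \<leftarrow> pmf_of_set (permutations_of_set (R - {x}));
                  return_pmf (foldl (?f E) (?f E (conv h) x) xs) }
            = do { y \<leftarrow> Xd n p K h; map_pmf conv (iter (expl_step n p K) m (h(x := Some y))) }"
    if x: "x \<in> R" for x
  proof -
    let ?T1 = "Tx n R x" and ?T2 = "TT n (R - {x})"
    define mg where "mg = (\<lambda>(f :: nat \<times> nat \<Rightarrow> bool, g :: nat \<times> nat \<Rightarrow> bool) z. if z \<in> ?T1 then f z else g z)"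
    have split: "Pi_pmf (TT n R) False ?B = map_pmf mg (pair_pmf (Pi_pmf ?T1 False ?B) (Pi_pmf ?T2 False ?B))"
      unfolding TT_split(1)[OF x Suc.prems(2)] mg_def
      by (rule Pi_pmf_union) (use TT_split(2)[OF x Suc.prems(2)] in auto)
    have upd: "?f (mg (E1, E2)) (conv h) x = conv (hx x E1)" for E1 E2
    proof -
      have xu: "x \<in> unexplored n h" using x Suc.prems(3) by simp
      have "?f (mg (E1, E2)) (conv h) x = conv (h(x := Some (cls K (jmax n h (\<lambda>w. mg (E1, E2) (phi x w))))))"
        by (rule tetris_update_conv[OF K xu])
      also have "jmax n h (\<lambda>w. mg (E1, E2) (phi x w)) = jmax n h (\<lambda>w. E1 (phi x w))"
      proof (rule jmax_cong)
        fix w assume "w \<in> explored n h"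
        then have "phi x w \<in> ?T1" using bij_betw_apply[OF phi_bij(1)[OF x Suc.prems(2,3)]] by blast
        then show "mg (E1, E2) (phi x w) = E1 (phi x w)" unfolding mg_def by simp
      qed
      finally show ?thesis unfolding hx_def .
    qed
    have fold: "foldl (?f (mg (E1, E2))) s xs = foldl (?f E2) s xs"
      if xs: "xs \<in> set_pmf (pmf_of_set (permutations_of_set (R - {x})))" for E1 E2 s xs
    proof (rule foldl_tetris_cong)
      fix u w assume u: "u \<in> set xs"
      have "xs \<in> permutations_of_set (R - {x})"
        using xs finR by (subst (asm) set_pmf_of_set) auto
      then have "set xs = R - {x}" by (rule permutations_of_setD)
      then have "u \<in> R" "u \<noteq> x" using u by auto
      then have "phi u w \<notin> ?T1" using phi_Tx_other[OF _ _ x] by blast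
      then show "mg (E1, E2) (phi u w) = E2 (phi u w)" unfolding mg_def by simp
    qed
    have IH: "do { E2 \<leftarrow> Pi_pmf ?T2 False ?B; xs \<leftarrow> pmf_of_set (permutations_of_set (R - {x}));
                  return_pmf (foldl (?f E2) (conv (hx x E1)) xs) }
            = map_pmf conv (iter (expl_step n p K) m (hx x E1))" for E1
    proof (rule Suc.IH)
      show "card (R - {x}) = m" using Suc.prems(1) x finR by simp
      show "R - {x} \<subseteq> {..<n}" using Suc.prems(2) by auto
      show "unexplored n (hx x E1) = R - {x}" unfolding hx_def unexpl_upd using Suc.prems(3) by simp
    qed
    have "do { E \<leftarrow> Pi_pmf (TT n R) False ?B; xs \<leftarrow> pmf_of_set (permutations_of_set (R - {x}));
                  return_pmf (foldl (?f E) (?f E (conv h) x) xs) }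
        = do { E1 \<leftarrow> Pi_pmf ?T1 False ?B; E2 \<leftarrow> Pi_pmf ?T2 False ?B; xs \<leftarrow> pmf_of_set (permutations_of_set (R - {x}));
                  return_pmf (foldl (?f (mg (E1, E2))) (?f (mg (E1, E2)) (conv h) x) xs) }"
      unfolding split by (simp add: pair_pmf_def bind_map_pmf bind_assoc_pmf bind_return_pmf)
    also have "\<dots> = do { E1 \<leftarrow> Pi_pmf ?T1 False ?B; E2 \<leftarrow> Pi_pmf ?T2 False ?B; xs \<leftarrow> pmf_of_set (permutations_of_set (R - {x}));
                  return_pmf (foldl (?f E2) (conv (hx x E1)) xs) }"
      by (intro bind_pmf_cong refl) (simp add: upd fold)
    also have "\<dots> = do { E1 \<leftarrow> Pi_pmf ?T1 False ?B; map_pmf conv (iter (expl_step n p K) m (hx x E1)) }"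
      by (simp only: IH)
    also have "\<dots> = do { y \<leftarrow> map_pmf (\<lambda>E1. cls K (jmax n h (\<lambda>w. E1 (phi x w)))) (Pi_pmf ?T1 False ?B);
                        map_pmf conv (iter (expl_step n p K) m (h(x := Some y))) }"
      by (simp add: bind_map_pmf hx_def)
    also have "\<dots> = do { y \<leftarrow> Xd n p K h; map_pmf conv (iter (expl_step n p K) m (h(x := Some y))) }"
      by (simp only: Xd_Tx[OF x Suc.prems(2,3)])
    finally show ?thesis .
  qed
  have "do { E \<leftarrow> Pi_pmf (TT n R) False ?B; ord \<leftarrow> pmf_of_set (permutations_of_set R);
         return_pmf (foldl (?f E) (conv h) ord) }
      = do { E \<leftarrow> Pi_pmf (TT n R) False ?B; x \<leftarrow> pmf_of_set R; xs \<leftarrow> pmf_of_set (permutations_of_set (R - {x}));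
         return_pmf (foldl (?f E) (?f E (conv h) x) xs) }"
    by (simp add: random_permutation_of_set[OF finR Rne] bind_assoc_pmf bind_return_pmf)
  also have "\<dots> = do { x \<leftarrow> pmf_of_set R; E \<leftarrow> Pi_pmf (TT n R) False ?B; xs \<leftarrow> pmf_of_set (permutations_of_set (R - {x}));
         return_pmf (foldl (?f E) (?f E (conv h) x) xs) }"
    by (rule bind_commute_pmf)
  also have "\<dots> = do { x \<leftarrow> pmf_of_set R; y \<leftarrow> Xd n p K h; map_pmf conv (iter (expl_step n p K) m (h(x := Some y))) }"
    by (intro bind_pmf_cong refl star) (use finR Rne in simp)
  also have "\<dots> = map_pmf conv (iter (expl_step n p K) (Suc m) h)"
    using Suc.prems(3) Rne by (simp add: step_alt map_bind_pmf bind_assoc_pmf bind_return_pmf)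
  finally show ?case .
qed

lemma tetris_pmf_eq:
  assumes K: "K \<ge> 1"
  shows "tetris_pmf n p K = map_pmf (conv \<circ> last) (expl_traj n p K n)"
proof -
  have TT: "TT n {..<n} = {(i, j). i < j \<and> j < n}" unfolding TT_def by auto
  have U: "unexplored n expl_init = {..<n}" by (auto simp: unexplored_def expl_init_def)
  have c0: "conv expl_init = (\<lambda>_. 0)" by (simp add: conv_def expl_init_def fun_eq_iff)
  have "tetris_pmf n p K = map_pmf conv (iter (expl_step n p K) n expl_init)"
    using tetris_equiv[OF K, of "{..<n}" n n expl_init p] U
    unfolding tetris_pmf_def gnp_def tetris_final_def TT c0 by (simp add: atLeast0LessThan)
  also have "\<dots> = map_pmf (conv \<circ> last) (expl_traj n p K n)"
    by (simp add: expl_traj_gtraj map_last_gtraj[symmetric] pmf.map_comp)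
  finally show ?thesis .
qed

lemma N_count_conv:
  assumes "k \<ge> 1"
  shows "N_count n (conv h) k = A_count n h k"
proof -
  have "{v. v < n \<and> conv h v = k} = {v. v < n \<and> h v = Some k}"
    using assms by (auto simp: conv_def split: option.splits)
  then show ?thesis by (simp add: N_count_def A_count_def)
qed

lemma wp_lt:
  fixes X :: "nat \<Rightarrow> 'a \<Rightarrow> real" and P :: "nat \<Rightarrow> 'a pmf"
  assumes conv: "\<And>\<epsilon>. \<epsilon> > 0 \<Longrightarrow> (\<lambda>n. measure_pmf.prob (P n) {x. \<bar>X n x - a\<bar> > \<epsilon>}) \<longlonglongrightarrow> 0"
    and x: "x < a"
  shows "(\<lambda>n. measure_pmf.prob (P n) {y. X n y \<le> x}) \<longlonglongrightarrow> 0"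
proof (rule tendsto_sandwich[OF _ _ tendsto_const conv])
  show "(a - x) / 2 > 0" using x by simp
  show "\<forall>\<^sub>F n in sequentially. 0 \<le> measure_pmf.prob (P n) {y. X n y \<le> x}" by simp
  have "measure_pmf.prob (P n) {y. X n y \<le> x} \<le> measure_pmf.prob (P n) {y. \<bar>X n y - a\<bar> > (a - x) / 2}" for n
  proof (rule measure_pmf.finite_measure_mono)
    show "{y. X n y \<le> x} \<subseteq> {y. \<bar>X n y - a\<bar> > (a - x) / 2}" using x by auto
  qed simp
  then show "\<forall>\<^sub>F n in sequentially. measure_pmf.prob (P n) {y. X n y \<le> x} \<le>
              measure_pmf.prob (P n) {y. \<bar>X n y - a\<bar> > (a - x) / 2}"
    by simp
qed

lemma wp_gt:
  fixes X :: "nat \<Rightarrow> 'a \<Rightarrow> real" and P :: "nat \<Rightarrow> 'a pmf"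
  assumes conv: "\<And>\<epsilon>. \<epsilon> > 0 \<Longrightarrow> (\<lambda>n. measure_pmf.prob (P n) {x. \<bar>X n x - a\<bar> > \<epsilon>}) \<longlonglongrightarrow> 0"
    and x: "x > a"
  shows "(\<lambda>n. measure_pmf.prob (P n) {y. X n y \<le> x}) \<longlonglongrightarrow> 1"
proof -
  have c0: "(\<lambda>n. measure_pmf.prob (P n) {y. \<bar>X n y - a\<bar> > (x - a) / 2}) \<longlonglongrightarrow> 0"
    by (rule conv) (use x in simp)
  have l1: "(\<lambda>n. 1 - measure_pmf.prob (P n) {y. \<bar>X n y - a\<bar> > (x - a) / 2}) \<longlonglongrightarrow> 1 - 0"
    by (intro tendsto_diff tendsto_const c0)
  have lo: "1 - measure_pmf.prob (P n) {y. \<bar>X n y - a\<bar> > (x - a) / 2} \<le> measure_pmf.prob (P n) {y. X n y \<le> x}" for n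
  proof -
    have e: "{y. X n y \<le> x} = space (measure_pmf (P n)) - {y. \<not> X n y \<le> x}" by auto
    have eq: "measure_pmf.prob (P n) {y. X n y \<le> x} = 1 - measure_pmf.prob (P n) {y. \<not> X n y \<le> x}"
      unfolding e by (rule measure_pmf.prob_compl) simp
    have "measure_pmf.prob (P n) {y. \<not> X n y \<le> x} \<le> measure_pmf.prob (P n) {y. \<bar>X n y - a\<bar> > (x - a) / 2}"
    proof (rule measure_pmf.finite_measure_mono)
      show "{y. \<not> X n y \<le> x} \<subseteq> {y. \<bar>X n y - a\<bar> > (x - a) / 2}" using x by auto
    qed simp
    then show ?thesis using eq by linarith
  qed
  show ?thesis
  proof (rule tendsto_sandwich[OF _ _ _ tendsto_const])
    show "\<forall>\<^sub>F n in sequentially. measure_pmf.prob (P n) {y. X n y \<le> x} \<le> 1" by simp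
    show "\<forall>\<^sub>F n in sequentially. 1 - measure_pmf.prob (P n) {y. \<bar>X n y - a\<bar> > (x - a) / 2}
              \<le> measure_pmf.prob (P n) {y. X n y \<le> x}" using lo by simp
    show "(\<lambda>n. 1 - measure_pmf.prob (P n) {y. \<bar>X n y - a\<bar> > (x - a) / 2}) \<longlonglongrightarrow> 1" using l1 by simp
  qed
qed

lemma cdf_return: "cdf (return borel a) y = (if a \<le> y then 1 else 0)"
  unfolding cdf_def2 by (subst measure_return) auto

lemma wp_eq: "\<not> isCont (cdf (return borel (a::real))) a"
proof
  assume cont: "isCont (cdf (return borel a)) a"
  have "(\<lambda>m. a - inverse (real (Suc m))) \<longlonglongrightarrow> a - 0"
    by (intro tendsto_intros LIMSEQ_inverse_real_of_nat)
  then have "(\<lambda>m. cdf (return borel a) (a - inverse (real (Suc m)))) \<longlonglongrightarrow> cdf (return borel a) a"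
    using cont by (intro isCont_tendsto_compose[where g = "cdf (return borel a)"]) auto
  moreover have "cdf (return borel a) (a - inverse (real (Suc m))) = 0" for m
    by (simp add: cdf_return)
  ultimately have "(\<lambda>m. 0::real) \<longlonglongrightarrow> cdf (return borel a) a" by simp
  then have "(\<lambda>m. 0::real) \<longlonglongrightarrow> 1" by (simp add: cdf_return)
  from LIMSEQ_unique[OF tendsto_const this] show False by simp
qed

lemma weak_point:
  fixes X :: "nat \<Rightarrow> 'a \<Rightarrow> real" and P :: "nat \<Rightarrow> 'a pmf"
  assumes conv: "\<And>\<epsilon>. \<epsilon> > 0 \<Longrightarrow> (\<lambda>n. measure_pmf.prob (P n) {x. \<bar>X n x - a\<bar> > \<epsilon>}) \<longlonglongrightarrow> 0"
  shows "weak_conv_m (\<lambda>n. distr (measure_pmf (P n)) borel (X n)) (return borel a)"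
  unfolding weak_conv_m_def weak_conv_def
proof (intro allI impI)
  fix x :: real
  assume cont: "isCont (cdf (return borel a)) x"
  have G: "cdf (distr (measure_pmf (P n)) borel (X n)) x = measure_pmf.prob (P n) {y. X n y \<le> x}" for n
    unfolding cdf_def2 by (subst measure_distr) (auto simp: vimage_def)
  consider "x < a" | "x = a" | "x > a" by linarith
  then show "(\<lambda>n. cdf (distr (measure_pmf (P n)) borel (X n)) x) \<longlonglongrightarrow> cdf (return borel a) x"
  proof cases
    case 1 then show ?thesis using wp_lt[OF conv 1] by (simp add: G cdf_return)
  next
    case 2 then show ?thesis using wp_eq cont by simp
  next
    case 3 then show ?thesis using wp_gt[OF conv 3] by (simp add: G cdf_return)
  qed
qed

theorem theorem2:
  fixes c :: real and K :: nat
  assumes "c > 0" and "K \<ge> 1"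
  shows "\<exists>\<alpha> :: real \<Rightarrow> nat \<Rightarrow> real.
           solves_tetris_ode c K \<alpha>
         \<and> (\<forall>\<beta>. solves_tetris_ode c K \<beta> \<longrightarrow> (\<forall>t\<in>{0..1}. \<forall>k\<in>{1..K}. \<beta> t k = \<alpha> t k))
         \<and> (\<forall>\<epsilon>>0. (\<lambda>n. measure_pmf.prob (expl_traj n (c / real n) K n)
                 {xs. \<exists>t\<in>{0..1}. \<exists>k\<in>{1..K}. \<bar>alpha_n n xs t k - \<alpha> t k\<bar> > \<epsilon>})
               \<longlonglongrightarrow> 0)
         \<and> (\<forall>k\<in>{1..K}. weak_conv_m
               (\<lambda>n. distr (measure_pmf (tetris_pmf n (c / real n) K)) borel
                       (\<lambda>h. real (N_count n h k) / real n))
               (return borel (\<alpha> 1 k)))"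
proof (intro exI conjI allI impI ballI)
  note c = assms(1) and K = assms(2)
  let ?\<alpha> = "ode_sol c K"
  have sol: "solves_tetris_ode c K ?\<alpha>" by (rule ode_sol_solves[OF c])
  show "solves_tetris_ode c K ?\<alpha>" by (rule sol)
  show "\<beta> t k = ?\<alpha> t k" if "solves_tetris_ode c K \<beta>" "t \<in> {0..1}" "k \<in> {1..K}" for \<beta> t k
    by (rule solution_unique[OF c sol that])
  show "(\<lambda>n. measure_pmf.prob (expl_traj n (c / real n) K n)
                 {xs. \<exists>t\<in>{0..1}. \<exists>k\<in>{1..K}. \<bar>alpha_n n xs t k - ?\<alpha> t k\<bar> > \<epsilon>}) \<longlonglongrightarrow> 0"
    if "\<epsilon> > 0" for \<epsilon>
    by (rule expl_conv[OF c K sol that])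
  fix k assume k: "k \<in> {1..K}"
  show "weak_conv_m (\<lambda>n. distr (measure_pmf (tetris_pmf n (c / real n) K)) borel
                       (\<lambda>h. real (N_count n h k) / real n)) (return borel (?\<alpha> 1 k))"
  proof (rule weak_point)
    fix \<epsilon> :: real assume eps: "\<epsilon> > 0"
    have le: "measure_pmf.prob (tetris_pmf n (c / real n) K) {h. \<bar>real (N_count n h k) / real n - ?\<alpha> 1 k\<bar> > \<epsilon>}
        \<le> measure_pmf.prob (expl_traj n (c / real n) K n)
                 {xs. \<exists>t\<in>{0..1}. \<exists>k\<in>{1..K}. \<bar>alpha_n n xs t k - ?\<alpha> t k\<bar> > \<epsilon>}" for n
    proof -
      have "measure_pmf.prob (tetris_pmf n (c / real n) K) {h. \<bar>real (N_count n h k) / real n - ?\<alpha> 1 k\<bar> > \<epsilon>}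
          = measure_pmf.prob (expl_traj n (c / real n) K n) {xs. \<bar>real (A_count n (last xs) k) / real n - ?\<alpha> 1 k\<bar> > \<epsilon>}"
        unfolding tetris_pmf_eq[OF K] using k by (simp add: vimage_def N_count_conv)
      also have "\<dots> \<le> measure_pmf.prob (expl_traj n (c / real n) K n)
                 {xs. \<exists>t\<in>{0..1}. \<exists>k\<in>{1..K}. \<bar>alpha_n n xs t k - ?\<alpha> t k\<bar> > \<epsilon>}"
      proof (rule measure_pmf.finite_measure_mono_AE)
        show "AE xs in measure_pmf (expl_traj n (c / real n) K n).
           xs \<in> {xs. \<bar>real (A_count n (last xs) k) / real n - ?\<alpha> 1 k\<bar> > \<epsilon>} \<longrightarrow>
           xs \<in> {xs. \<exists>t\<in>{0..1}. \<exists>k\<in>{1..K}. \<bar>alpha_n n xs t k - ?\<alpha> t k\<bar> > \<epsilon>}"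
        proof (unfold AE_measure_pmf_iff, intro ballI impI)
          fix xs assume xs: "xs \<in> set_pmf (expl_traj n (c / real n) K n)"
            and gt: "xs \<in> {xs. \<bar>real (A_count n (last xs) k) / real n - ?\<alpha> 1 k\<bar> > \<epsilon>}"
          have "length xs = Suc n" using gtraj_support[OF xs[unfolded expl_traj_gtraj]] by blast
          then have "last xs = xs ! n" by (metis diff_Suc_1 last_conv_nth list.size(3) nat.distinct(1))
          then have "alpha_n n xs 1 k = real (A_count n (last xs) k) / real n"
            by (simp add: alpha_n_def)
          then have "\<bar>alpha_n n xs 1 k - ?\<alpha> 1 k\<bar> > \<epsilon>" using gt by simp
          moreover have "(1::real) \<in> {0..1}" by simp
          ultimately show "xs \<in> {xs. \<exists>t\<in>{0..1}. \<exists>k\<in>{1..K}. \<bar>alpha_n n xs t k - ?\<alpha> t k\<bar> > \<epsilon>}"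
            using k by blast
        qed
      qed simp
      finally show ?thesis .
    qed
    show "(\<lambda>n. measure_pmf.prob (tetris_pmf n (c / real n) K) {h. \<bar>real (N_count n h k) / real n - ?\<alpha> 1 k\<bar> > \<epsilon>}) \<longlonglongrightarrow> 0"
      by (rule tendsto_sandwich[OF _ _ tendsto_const expl_conv[OF c K sol eps]]) (use le in auto)
  qed
qed

end
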